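(* Let $T$ be a tree of maximum degree at most $3$ and let $S$ be a set of endvertices (vertices of degree at most $1$) of $T$ such that $S$ is not an exponential dominating set of $T$, but $S$ is a subset of some minimum exponential dominating set of $T$. Root $T$ at a vertex $r\in V(T)\setminus S$. For every vertex $u$ of $T$, let $T_u$ be the subtree consisting of $u$ and all its descendants, and define $$\partial w(u)=\max\left\{2^{{\rm dist}_T(u,v)}\left(1-w_{(T_u,S\cap V(T_u))}(v)\right):v\in V(T_u)\right\}.$$ (i) If $u\neq r$ is a vertex with $\partial w(u)>1$ and $\partial w(v)\leq 1$ for every descendant $v$ of $u$, then $S\cup\{u\}$ is a subset of some minimum exponential dominating set of $T$. (ii) If $\partial w(u)\leq 1$ for every vertex $u$ of $T$, then $S\cup\{r\}$ is a minimum exponential dominating set of $T$.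
   Context: ${\rm dist}_T(u,v)$ is the usual distance in $T$. For a graph $G$, a set $S\subseteq V(G)$, and vertices $u,v$ with $u\in S$ or $v\in S$, ${\rm dist}_{(G,S)}(u,v)$ is the minimum number of edges of a path $P$ in $G$ between $u$ and $v$ such that $S$ contains exactly one endvertex of $P$ and no internal vertex of $P$, and $\infty$ if no such path exists (so ${\rm dist}_{(G,S)}(u,u)=0$ for $u\in S$). For $u\in V(G)$, $w_{(G,S)}(u)=\sum_{v\in S}(1/2)^{{\rm dist}_{(G,S)}(u,v)-1}$ with $(1/2)^{\infty}=0$. $S$ is an exponential dominating set of $G$ if $w_{(G,S)}(u)\geq 1$ for every $u\in V(G)$, and $\gamma_e(G)$ is the minimum cardinality of an exponential dominating set of $G$; an exponential dominating set of cardinality $\gamma_e(G)$ is called minimum. *)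

theory Defs
  imports Complex_Main "HOL-Library.Extended_Nat"
begin

definition graph :: "'a set \<Rightarrow> ('a \<Rightarrow> 'a \<Rightarrow> bool) \<Rightarrow> bool" where
  "graph V E \<longleftrightarrow> finite V \<and> (\<forall>x y. E x y \<longrightarrow> x \<in> V \<and> y \<in> V \<and> x \<noteq> y \<and> E y x)"

definition is_path :: "'a set \<Rightarrow> ('a \<Rightarrow> 'a \<Rightarrow> bool) \<Rightarrow> 'a list \<Rightarrow> bool" where
  "is_path V E xs \<longleftrightarrow> xs \<noteq> [] \<and> distinct xs \<and> set xs \<subseteq> V \<and>
     (\<forall>i. Suc i < length xs \<longrightarrow> E (xs ! i) (xs ! Suc i))"

definition connected_graph :: "'a set \<Rightarrow> ('a \<Rightarrow> 'a \<Rightarrow> bool) \<Rightarrow> bool" where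
  "connected_graph V E \<longleftrightarrow> V \<noteq> {} \<and>
     (\<forall>u\<in>V. \<forall>v\<in>V. \<exists>xs. is_path V E xs \<and> hd xs = u \<and> last xs = v)"

definition is_cycle :: "'a set \<Rightarrow> ('a \<Rightarrow> 'a \<Rightarrow> bool) \<Rightarrow> 'a list \<Rightarrow> bool" where
  "is_cycle V E xs \<longleftrightarrow> is_path V E xs \<and> length xs \<ge> 3 \<and> E (last xs) (hd xs)"

definition tree :: "'a set \<Rightarrow> ('a \<Rightarrow> 'a \<Rightarrow> bool) \<Rightarrow> bool" where
  "tree V E \<longleftrightarrow> graph V E \<and> connected_graph V E \<and> (\<nexists>xs. is_cycle V E xs)"

definition degree :: "'a set \<Rightarrow> ('a \<Rightarrow> 'a \<Rightarrow> bool) \<Rightarrow> 'a \<Rightarrow> nat" where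
  "degree V E u = card {v\<in>V. E u v}"

definition gdist :: "'a set \<Rightarrow> ('a \<Rightarrow> 'a \<Rightarrow> bool) \<Rightarrow> 'a \<Rightarrow> 'a \<Rightarrow> enat" where
  "gdist V E u v = (INF xs \<in> {xs. is_path V E xs \<and> hd xs = u \<and> last xs = v}. enat (length xs - 1))"

definition sdist :: "'a set \<Rightarrow> ('a \<Rightarrow> 'a \<Rightarrow> bool) \<Rightarrow> 'a set \<Rightarrow> 'a \<Rightarrow> 'a \<Rightarrow> enat" where
  "sdist V E S u v = (INF xs \<in> {xs. is_path V E xs \<and> hd xs = u \<and> last xs = v \<and>
      card ({hd xs, last xs} \<inter> S) = 1 \<and> set (butlast (tl xs)) \<inter> S = {}}. enat (length xs - 1))"

definition half_pow :: "enat \<Rightarrow> real" where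
  "half_pow d = (case d of enat n \<Rightarrow> (1/2) powi (int n - 1) | \<infinity> \<Rightarrow> 0)"

definition weight :: "'a set \<Rightarrow> ('a \<Rightarrow> 'a \<Rightarrow> bool) \<Rightarrow> 'a set \<Rightarrow> 'a \<Rightarrow> real" where
  "weight V E S u = (\<Sum>v\<in>S. half_pow (sdist V E S u v))"

definition exp_dom :: "'a set \<Rightarrow> ('a \<Rightarrow> 'a \<Rightarrow> bool) \<Rightarrow> 'a set \<Rightarrow> bool" where
  "exp_dom V E S \<longleftrightarrow> S \<subseteq> V \<and> (\<forall>u\<in>V. weight V E S u \<ge> 1)"

definition min_exp_dom :: "'a set \<Rightarrow> ('a \<Rightarrow> 'a \<Rightarrow> bool) \<Rightarrow> 'a set \<Rightarrow> bool" where
  "min_exp_dom V E S \<longleftrightarrow> exp_dom V E S \<and> (\<forall>S'. exp_dom V E S' \<longrightarrow> card S \<le> card S')"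

definition descendants :: "'a set \<Rightarrow> ('a \<Rightarrow> 'a \<Rightarrow> bool) \<Rightarrow> 'a \<Rightarrow> 'a \<Rightarrow> 'a set" where
  "descendants V E r u = {v\<in>V. v \<noteq> u \<and>
     (\<exists>xs. is_path V E xs \<and> hd xs = r \<and> last xs = v \<and> u \<in> set xs)}"

definition subtree_verts :: "'a set \<Rightarrow> ('a \<Rightarrow> 'a \<Rightarrow> bool) \<Rightarrow> 'a \<Rightarrow> 'a \<Rightarrow> 'a set" where
  "subtree_verts V E r u = insert u (descendants V E r u)"

definition restrict_edges :: "('a \<Rightarrow> 'a \<Rightarrow> bool) \<Rightarrow> 'a set \<Rightarrow> 'a \<Rightarrow> 'a \<Rightarrow> bool" where
  "restrict_edges E W x y \<longleftrightarrow> E x y \<and> x \<in> W \<and> y \<in> W"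

definition dw :: "'a set \<Rightarrow> ('a \<Rightarrow> 'a \<Rightarrow> bool) \<Rightarrow> 'a set \<Rightarrow> 'a \<Rightarrow> 'a \<Rightarrow> real" where
  "dw V E S r u = (let W = subtree_verts V E r u in
     Max ((\<lambda>v. 2 ^ the_enat (gdist V E u v) *
        (1 - weight W (restrict_edges E W) (S \<inter> W) v)) ` W))"

end

theory Submission
  imports Defs
begin


lemma enat_INF_attained:
  fixes P :: "'b list set"
  assumes "xs \<in> P"
  shows "\<exists>ys\<in>P. (INF zs\<in>P. enat (length zs - 1)) = enat (length ys - 1) \<and>
              (\<forall>zs\<in>P. length ys \<le> length zs)"
proof -
  obtain n where n: "\<exists>ys\<in>P. length ys = n" "\<forall>m. (\<exists>ys\<in>P. length ys = m) \<longrightarrow> n \<le> m"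
    using ex_has_least_nat[of "\<lambda>n. \<exists>ys\<in>P. length ys = n" "length xs" id] assms by auto
  then obtain ys where ys: "ys \<in> P" "length ys = n" by auto
  have m: "\<forall>zs\<in>P. length ys \<le> length zs" using n ys by auto
  have "(INF zs\<in>P. enat (length zs - 1)) = enat (length ys - 1)"
    apply (rule antisym)
     apply (rule INF_lower2[OF ys(1)], simp)
    apply (rule INF_greatest) using m by auto
  then show ?thesis using ys m by blast
qed

lemma hp_enat: "half_pow (enat n) = 2 / 2 ^ n"
proof (cases n)
  case 0 then show ?thesis by (simp add: half_pow_def)
next
  case (Suc m)
  have "int n - 1 = int m" using Suc by simp
  then show ?thesis using Suc by (simp add: half_pow_def power_divide)
qed

lemma hp_nonneg: "half_pow d \<ge> 0"
  by (cases d) (auto simp: hp_enat, simp add: half_pow_def)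

lemma hp_mono: "a \<le> b \<Longrightarrow> half_pow b \<le> half_pow a"
proof (cases b)
  case (enat m)
  assume ab: "a \<le> b"
  then obtain n where "a = enat n" "n \<le> m" using enat by (cases a) auto
  then show ?thesis using enat by (auto simp: hp_enat intro!: divide_left_mono power_increasing)
next
  case infinity
  then show ?thesis using hp_nonneg[of a] by (simp add: half_pow_def)
qed

lemma path_edge: "is_path V E xs \<Longrightarrow> Suc i < length xs \<Longrightarrow> E (xs!i) (xs!Suc i)"
  by (simp add: is_path_def)

lemma path_in: "is_path V E xs \<Longrightarrow> i < length xs \<Longrightarrow> xs!i \<in> V"
  unfolding is_path_def by (meson nth_mem subsetD)

lemma path_take: "is_path V E xs \<Longrightarrow> 0 < n \<Longrightarrow> is_path V E (take n xs)"
  unfolding is_path_def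
  by (auto dest: in_set_takeD) 

lemma path_drop: "is_path V E xs \<Longrightarrow> n < length xs \<Longrightarrow> is_path V E (drop n xs)"
  unfolding is_path_def
  by (auto dest: in_set_dropD)

lemma path_app:
  assumes "is_path V E xs" "is_path V E ys" "set xs \<inter> set ys = {}" "E (last xs) (hd ys)"
  shows "is_path V E (xs @ ys)"
  unfolding is_path_def
proof (intro conjI allI impI)
  show "xs @ ys \<noteq> []" using assms by (auto simp: is_path_def)
  show "distinct (xs @ ys)" using assms by (auto simp: is_path_def)
  show "set (xs @ ys) \<subseteq> V" using assms by (auto simp: is_path_def)
  fix i assume i: "Suc i < length (xs @ ys)"
  consider "Suc i < length xs" | "Suc i = length xs" | "Suc i > length xs" by linarith
  then show "E ((xs @ ys) ! i) ((xs @ ys) ! Suc i)"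
  proof cases
    case 1 then show ?thesis using assms(1) by (simp add: nth_append is_path_def)
  next
    case 2
    have "xs \<noteq> []" "ys \<noteq> []" using assms by (auto simp: is_path_def)
    moreover have "i = length xs - 1" using 2 by simp
    ultimately show ?thesis using 2 assms(4) by (simp add: nth_append last_conv_nth hd_conv_nth)
  next
    case 3
    then have "(xs @ ys) ! i = ys ! (i - length xs)" "(xs @ ys) ! Suc i = ys ! Suc (i - length xs)"
      by (auto simp: nth_append Suc_diff_le)
    then show ?thesis using assms(2) i 3 unfolding is_path_def by auto
  qed
qed

lemma path_rev: "graph V E \<Longrightarrow> is_path V E xs \<Longrightarrow> is_path V E (rev xs)"
  unfolding is_path_def graph_def
  apply (auto simp: rev_nth)
  by (metis Suc_diff_Suc Suc_lessD diff_Suc_less length_greater_0_conv zero_less_diff)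

lemma path_sub_W: "is_path V E xs \<Longrightarrow> set xs \<subseteq> W \<Longrightarrow> is_path W (restrict_edges E W) xs"
  unfolding is_path_def restrict_edges_def by auto

lemma path_W_V: "W \<subseteq> V \<Longrightarrow> is_path W (restrict_edges E W) xs \<Longrightarrow> is_path V E xs"
  unfolding is_path_def restrict_edges_def by auto

lemma internal_mem: "0 < j \<Longrightarrow> Suc j < length xs \<Longrightarrow> xs!j \<in> set (butlast (tl xs))"
proof -
  assume a: "0 < j" "Suc j < length xs"
  have "butlast (tl xs) ! (j - 1) = xs ! j" using a by (simp add: nth_butlast nth_tl)
  moreover have "j - 1 < length (butlast (tl xs))" using a by simp
  ultimately show ?thesis by (metis nth_mem)
qed

lemma internal_nth: "x \<in> set (butlast (tl xs)) \<Longrightarrow> \<exists>j. 0 < j \<and> Suc j < length xs \<and> xs!j = x"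
proof -
  assume "x \<in> set (butlast (tl xs))"
  then obtain k where k: "k < length (butlast (tl xs))" "butlast (tl xs) ! k = x" by (auto simp: in_set_conv_nth)
  then show ?thesis by (intro exI[of _ "Suc k"]) (auto simp: nth_butlast nth_tl)
qed

definition vp where "vp V E S u v xs \<longleftrightarrow> is_path V E xs \<and> hd xs = u \<and> last xs = v \<and>
      card ({hd xs, last xs} \<inter> S) = 1 \<and> set (butlast (tl xs)) \<inter> S = {}"

lemma sdist_vp: "sdist V E S u v = (INF xs\<in>{xs. vp V E S u v xs}. enat (length xs - 1))"
  by (simp add: sdist_def vp_def)

lemma sdist_le: "vp V E S u v xs \<Longrightarrow> sdist V E S u v \<le> enat (length xs - 1)"
  unfolding sdist_vp by (rule INF_lower2[of xs]) auto

lemma gdist_le: "is_path V E xs \<Longrightarrow> hd xs = u \<Longrightarrow> last xs = v \<Longrightarrow> gdist V E u v \<le> enat (length xs - 1)"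
  unfolding gdist_def by (rule INF_lower2[of xs]) auto

lemma sdist_attained: "sdist V E S u v = enat n \<Longrightarrow> \<exists>xs. vp V E S u v xs \<and> length xs = Suc n"
proof -
  assume a: "sdist V E S u v = enat n"
  have "{xs. vp V E S u v xs} \<noteq> {}"
  proof
    assume "{xs. vp V E S u v xs} = {}"
    then have "sdist V E S u v = \<infinity>" unfolding sdist_vp by (metis INF_empty top_enat_def)
    with a show False by simp
  qed
  then obtain xs where "vp V E S u v xs" by auto
  from enat_INF_attained[of xs "{xs. vp V E S u v xs}"] this obtain ys where
    ys: "vp V E S u v ys" "sdist V E S u v = enat (length ys - 1)" unfolding sdist_vp by auto
  moreover have "ys \<noteq> []" using ys(1) by (simp add: vp_def is_path_def)
  ultimately show ?thesis using a by (intro exI[of _ ys]) auto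
qed

lemma sdist_self: "u \<in> V \<Longrightarrow> u \<in> S \<Longrightarrow> sdist V E S u u = 0"
proof -
  assume "u \<in> V" "u \<in> S"
  then have "vp V E S u u [u]" by (simp add: vp_def is_path_def)
  from sdist_le[OF this] show ?thesis by (simp add: zero_enat_def[symmetric])
qed


lemma distinct_hd_last: "distinct xs \<Longrightarrow> xs \<noteq> [] \<Longrightarrow> hd xs = last xs \<Longrightarrow> length xs = 1"
proof (rule ccontr)
  assume a: "distinct xs" "xs \<noteq> []" "hd xs = last xs" "length xs \<noteq> 1"
  then have "length xs \<ge> 2" by (cases xs) auto
  then have "xs ! 0 \<noteq> xs ! (length xs - 1)" using a(1) nth_eq_iff_index_eq by fastforce
  then show False using a by (simp add: hd_conv_nth last_conv_nth)
qed

lemma no_cyc: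
  assumes T: "tree V E" and p: "is_path V E xs" and ij: "i + 2 \<le> j" "j < length xs"
  shows "\<not> E (xs!j) (xs!i)"
proof
  assume e: "E (xs!j) (xs!i)"
  define ys where "ys = drop i (take (Suc j) xs)"
  have "is_path V E (take (Suc j) xs)" by (rule path_take[OF p]) simp
  then have py: "is_path V E ys" unfolding ys_def by (rule path_drop) (use ij in auto)
  have ly: "length ys = Suc j - i" using ij unfolding ys_def by simp
  have "hd ys = xs!i" using ij unfolding ys_def by (simp add: hd_drop_conv_nth)
  moreover have "last ys = xs!j" using ij ly unfolding ys_def
    by (simp add: last_conv_nth)
  ultimately have "is_cycle V E ys" using py ly ij e unfolding is_cycle_def by auto
  then show False using T unfolding tree_def by auto
qed

lemma graph_sym: "graph V E \<Longrightarrow> E a b \<Longrightarrow> E b a"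
  unfolding graph_def by auto

lemma graph_in: "graph V E \<Longrightarrow> E a b \<Longrightarrow> a \<in> V \<and> b \<in> V"
  unfolding graph_def by auto

lemma path_snoc: "is_path V E xs \<Longrightarrow> b \<in> V \<Longrightarrow> b \<notin> set xs \<Longrightarrow> E (last xs) b \<Longrightarrow> is_path V E (xs @ [b])"
  by (rule path_app) (auto simp: is_path_def)

lemma last_before:
  fixes P :: "nat \<Rightarrow> bool"
  shows "P i \<Longrightarrow> i \<le> k \<Longrightarrow> \<exists>a. i \<le> a \<and> a \<le> k \<and> P a \<and> (\<forall>m. a < m \<and> m \<le> k \<longrightarrow> \<not> P m)"
proof (induction k)
  case 0 then show ?case by auto
next
  case (Suc k)
  show ?case
  proof (cases "P (Suc k)")
    case True then show ?thesis using Suc by (intro exI[of _ "Suc k"]) auto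
  next
    case False
    show ?thesis
    proof (cases "i = Suc k")
      case True then show ?thesis using Suc False by auto
    next
      case ne: False
      then obtain a where "i \<le> a \<and> a \<le> k \<and> P a \<and> (\<forall>m. a < m \<and> m \<le> k \<longrightarrow> \<not> P m)"
        using Suc by auto
      then show ?thesis using False by (intro exI[of _ a]) (auto simp: le_Suc_eq)
    qed
  qed
qed

lemma first_after:
  fixes P :: "nat \<Rightarrow> bool"
  assumes "P j" "k \<le> j"
  shows "\<exists>b. k \<le> b \<and> b \<le> j \<and> P b \<and> (\<forall>m. k \<le> m \<and> m < b \<longrightarrow> \<not> P m)"
proof -
  define b where "b = (LEAST m. k \<le> m \<and> P m)"
  have "k \<le> b \<and> P b" unfolding b_def by (rule LeastI[of _ j]) (use assms in auto)
  moreover have "b \<le> j" unfolding b_def by (rule Least_le) (use assms in auto)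
  moreover have "\<forall>m. k \<le> m \<and> m < b \<longrightarrow> \<not> P m" unfolding b_def using not_less_Least by blast
  ultimately show ?thesis by blast
qed

lemma distinct_idx: "distinct xs \<Longrightarrow> i < length xs \<Longrightarrow> j < length xs \<Longrightarrow> xs!i = xs!j \<Longrightarrow> i = j"
  by (simp add: nth_eq_iff_index_eq)

locale tr =
  fixes V E r u
  assumes T: "tree V E" and rV: "r \<in> V" and uV: "u \<in> V"
begin

abbreviation "W \<equiv> subtree_verts V E r u"

lemma G: "graph V E" using T unfolding tree_def by auto

lemma finV: "finite V" using G unfolding graph_def by auto

lemma W_sub: "W \<subseteq> V"
  unfolding subtree_verts_def descendants_def using uV by auto

lemma u_in_W: "u \<in> W" unfolding subtree_verts_def by auto

lemma conn: "a \<in> V \<Longrightarrow> b \<in> V \<Longrightarrow> \<exists>xs. is_path V E xs \<and> hd xs = a \<and> last xs = b"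
  using T unfolding tree_def connected_graph_def by auto

lemma in_W_path: "b \<in> W \<Longrightarrow> b \<noteq> u \<Longrightarrow> \<exists>xs. is_path V E xs \<and> hd xs = r \<and> last xs = b \<and> u \<in> set xs"
  unfolding subtree_verts_def descendants_def by auto

lemma path_to_W: "is_path V E xs \<Longrightarrow> hd xs = r \<Longrightarrow> u \<in> set xs \<Longrightarrow> last xs \<in> W"
proof -
  assume a: "is_path V E xs" "hd xs = r" "u \<in> set xs"
  have "last xs \<in> V" using a(1) unfolding is_path_def by auto
  then show ?thesis using a unfolding subtree_verts_def descendants_def by auto
qed

lemma r_notin_W: "u \<noteq> r \<Longrightarrow> r \<notin> W"
proof
  assume ne: "u \<noteq> r" and rW: "r \<in> W"
  then obtain xs where xs: "is_path V E xs" "hd xs = r" "last xs = r" "u \<in> set xs"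
    using in_W_path by metis
  then have "length xs = 1" using distinct_hd_last unfolding is_path_def by metis
  then have "xs = [r]" using xs by (cases xs) auto
  then show False using xs ne by auto
qed

lemma cross_edge:
  assumes aV: "a \<in> V" and aW: "a \<notin> W" and bW: "b \<in> W" and e: "E a b"
  shows "b = u"
proof (rule ccontr)
  assume bu: "b \<noteq> u"
  then obtain xs where xs: "is_path V E xs" "hd xs = r" "last xs = b" "u \<in> set xs"
    using in_W_path bW by metis
  have au: "a \<noteq> u" using aW u_in_W by auto
  have ne: "xs \<noteq> []" using xs by (auto simp: is_path_def)
  show False
  proof (cases "a \<in> set xs")
    case False
    have "is_path V E (xs @ [a])" by (rule path_snoc) (use xs False aV graph_sym[OF G e] in auto)
    then have "last (xs @ [a]) \<in> W" by (rule path_to_W) (use xs ne in auto)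
    then show False using aW by simp
  next
    case True
    obtain i where i: "i < length xs" "xs!i = a" using True by (auto simp: in_set_conv_nth)
    obtain j where j: "j < length xs" "xs!j = u" using xs(4) by (auto simp: in_set_conv_nth)
    define n where "n = length xs"
    have lastn: "xs!(n - 1) = b" using xs(3) ne unfolding n_def by (simp add: last_conv_nth)
    show False
    proof (cases "j < i")
      case ji: True
      have pt: "is_path V E (take (Suc i) xs)" by (rule path_take[OF xs(1)]) simp
      have ht: "hd (take (Suc i) xs) = r" using xs(2) ne by simp
      have "take (Suc i) xs ! j = u" "j < length (take (Suc i) xs)" using ji j i by auto
      then have ut: "u \<in> set (take (Suc i) xs)" by (metis nth_mem)
      have "last (take (Suc i) xs) \<in> W" by (rule path_to_W[OF pt ht ut])
      moreover have "last (take (Suc i) xs) = a" using i by (simp add: take_Suc_conv_app_nth)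
      ultimately show False using aW by simp
    next
      case ji: False
      have "i \<noteq> j" using i j au by auto
      then have "i < j" using ji by simp
      moreover have "j \<noteq> n - 1" using lastn j bu by auto
      moreover have "j < n" using j n_def by simp
      ultimately have ii: "i + 2 \<le> n - 1" by linarith
      have nn: "n - 1 < length xs" using ne n_def by simp
      have "\<not> E (xs!(n-1)) (xs!i)" by (rule no_cyc[OF T xs(1) ii nn])
      moreover have "E (xs!(n-1)) (xs!i)" unfolding lastn i(2) by (rule graph_sym[OF G e])
      ultimately show False by simp
    qed
  qed
qed

lemma cross_edge': "a \<in> V \<Longrightarrow> a \<notin> W \<Longrightarrow> b \<in> W \<Longrightarrow> E b a \<Longrightarrow> b = u"
  using cross_edge graph_sym[OF G, of b a] by blast

lemma enter_u:
  assumes p: "is_path V E xs" and h: "xs!0 \<notin> W" and k: "k < length xs" "xs!k \<in> W"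
  shows "\<exists>j\<le>k. 0 < j \<and> xs!j = u \<and> xs!(j-1) \<notin> W"
proof -
  obtain j where j: "0 \<le> j" "j \<le> k" "xs!j \<in> W" "\<forall>m. 0 \<le> m \<and> m < j \<longrightarrow> xs!m \<notin> W"
    using first_after[of "\<lambda>m. xs!m \<in> W" k 0] k by auto
  have j0: "0 < j" using j h by (cases j) auto
  have "xs!(j-1) \<notin> W" using j j0 by auto
  moreover have "E (xs!(j-1)) (xs!j)" using path_edge[OF p, of "j-1"] j0 j k by simp
  moreover have "xs!(j-1) \<in> V" using path_in[OF p] j k by simp
  ultimately have "xs!j = u" using cross_edge j by blast
  then show ?thesis using j j0 \<open>xs!(j-1) \<notin> W\<close> by auto
qed

lemma parent:
  assumes ur: "u \<noteq> r"
  shows "\<exists>p. p \<in> V \<and> p \<notin> W \<and> E u p \<and> (\<forall>b\<in>V. b \<notin> W \<longrightarrow> E u b \<longrightarrow> b = p)"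
proof -
  obtain ps where ps: "is_path V E ps" "hd ps = r" "last ps = u" using conn rV uV by blast
  define n where "n = length ps"
  have ne: "ps \<noteq> []" using ps by (auto simp: is_path_def)
  have dist: "distinct ps" using ps by (simp add: is_path_def)
  have "n \<noteq> 1" using ps ur ne n_def by (cases ps) auto
  moreover have "n \<ge> 1" using ne n_def by (cases ps) auto
  ultimately have n2: "n \<ge> 2" by linarith
  have lu: "ps!(n-1) = u" using ps ne by (simp add: n_def last_conv_nth)
  have h0: "ps!0 = r" using ps ne by (simp add: hd_conv_nth)
  define p where "p = ps!(n-2)"
  have sn: "Suc (n-2) = n - 1" "Suc (n-2) < length ps" using n2 n_def by auto
  have epu: "E p u" using path_edge[OF ps(1) sn(2)] lu unfolding p_def sn(1) by simp
  have pV: "p \<in> V" using path_in[OF ps(1)] n2 unfolding p_def n_def by simp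
  have pW: "p \<notin> W"
  proof
    assume pW: "p \<in> W"
    have p0: "ps!0 \<notin> W" using h0 r_notin_W[OF ur] by simp
    have nl: "n - 2 < length ps" using n2 n_def by simp
    obtain j where j: "j \<le> n - 2" "0 < j" "ps!j = u"
      using enter_u[OF ps(1) p0 nl] pW p_def by auto
    then have "j = n - 1" using distinct_idx[OF dist, of j "n-1"] lu n_def n2 by simp
    then show False using j n2 by simp
  qed
  have uniq: "\<forall>b\<in>V. b \<notin> W \<longrightarrow> E u b \<longrightarrow> b = p"
  proof (intro ballI impI)
    fix b assume b: "b \<in> V" "b \<notin> W" "E u b"
    show "b = p"
    proof (cases "b \<in> set ps")
      case False
      have "is_path V E (ps @ [b])" by (rule path_snoc) (use ps False b in auto)
      then have "last (ps @ [b]) \<in> W" by (rule path_to_W) (use ps ne in auto)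
      then show ?thesis using b by simp
    next
      case True
      then obtain i where i: "i < n" "ps!i = b" by (auto simp: in_set_conv_nth n_def)
      have "i \<noteq> n - 1" using i lu b u_in_W by auto
      moreover have "\<not> i + 2 \<le> n - 1"
      proof
        assume "i + 2 \<le> n - 1"
        moreover have "n - 1 < length ps" using n_def n2 by simp
        ultimately have "\<not> E (ps!(n-1)) (ps!i)" by (rule no_cyc[OF T ps(1)])
        then show False using lu i b by simp
      qed
      ultimately have "i = n - 2" using i by linarith
      then show ?thesis using i p_def by simp
    qed
  qed
  show ?thesis using pV pW graph_sym[OF G epu] uniq by blast
qed

lemma stay_in:
  assumes p: "is_path V E xs" and i: "xs!i \<in> W" and j: "xs!j \<in> W" "j < length xs"
    and k: "i \<le> k" "k \<le> j"
  shows "xs!k \<in> W"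
proof (rule ccontr)
  assume kW: "xs!k \<notin> W"
  have dist: "distinct xs" using p by (simp add: is_path_def)
  have ik: "i < k" using i kW k by (cases "i = k") auto
  have kj: "k < j" using j kW k by (cases "j = k") auto
  obtain a where a: "i \<le> a" "a \<le> k" "xs!a \<in> W" "\<forall>m. a < m \<and> m \<le> k \<longrightarrow> xs!m \<notin> W"
    using last_before[of "\<lambda>m. xs!m \<in> W" i k] i ik by auto
  have ak: "a < k" using a kW by (cases "a = k") auto
  have "xs!Suc a \<notin> W" using a ak by auto
  moreover have "E (xs!a) (xs!Suc a)" using path_edge[OF p] ak kj j by simp
  moreover have "xs!Suc a \<in> V" using path_in[OF p] ak kj j by simp
  ultimately have au: "xs!a = u" using cross_edge' a by blast
  obtain b where b: "k \<le> b" "b \<le> j" "xs!b \<in> W" "\<forall>m. k \<le> m \<and> m < b \<longrightarrow> xs!m \<notin> W"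
    using first_after[of "\<lambda>m. xs!m \<in> W" j k] j kj by auto
  have kb: "k < b" using b kW by (cases "b = k") auto
  have "xs!(b-1) \<notin> W" using b kb by auto
  moreover have "E (xs!(b-1)) (xs!b)" using path_edge[OF p, of "b-1"] kb b j by simp
  moreover have "xs!(b-1) \<in> V" using path_in[OF p] b j by simp
  ultimately have bu: "xs!b = u" using cross_edge b by blast
  have "a = b" using distinct_idx[OF dist, of a b] au bu b j ak kj by simp
  then show False using ak kb by simp
qed

lemma stay_out:
  assumes ur: "u \<noteq> r" and p: "is_path V E xs" and i: "xs!i \<notin> W" and j: "xs!j \<notin> W" "j < length xs"
    and k: "i \<le> k" "k \<le> j"
  shows "xs!k \<notin> W"
proof
  assume kW: "xs!k \<in> W"
  obtain pp where pp: "pp \<in> V" "pp \<notin> W" "E u pp" "\<forall>b\<in>V. b \<notin> W \<longrightarrow> E u b \<longrightarrow> b = pp"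
    using parent[OF ur] by blast
  have dist: "distinct xs" using p by (simp add: is_path_def)
  have ik: "i < k" using i kW k by (cases "i = k") auto
  have kj: "k < j" using j kW k by (cases "j = k") auto
  obtain a where a: "i \<le> a" "a \<le> k" "xs!a \<notin> W" "\<forall>m. a < m \<and> m \<le> k \<longrightarrow> xs!m \<in> W"
    using last_before[of "\<lambda>m. xs!m \<notin> W" i k] i ik by auto
  have ak: "a < k" using a kW by (cases "a = k") auto
  have "xs!Suc a \<in> W" using a ak by auto
  moreover have e1: "E (xs!a) (xs!Suc a)" using path_edge[OF p] ak kj j by simp
  moreover have aV: "xs!a \<in> V" using path_in[OF p] ak kj j by simp
  ultimately have au: "xs!Suc a = u" using cross_edge a by blast
  have ap: "xs!a = pp" using pp(4) aV a(3) graph_sym[OF G e1] au by auto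
  obtain b where b: "k \<le> b" "b \<le> j" "xs!b \<notin> W" "\<forall>m. k \<le> m \<and> m < b \<longrightarrow> xs!m \<in> W"
    using first_after[of "\<lambda>m. xs!m \<notin> W" j k] j kj by auto
  have kb: "k < b" using b kW by (cases "b = k") auto
  have "xs!(b-1) \<in> W" using b kb by auto
  moreover have e2: "E (xs!(b-1)) (xs!b)" using path_edge[OF p, of "b-1"] kb b j by simp
  moreover have bV: "xs!b \<in> V" using path_in[OF p] b j by simp
  ultimately have bu: "xs!(b-1) = u" using cross_edge' b by blast
  have bp: "xs!b = pp" using pp(4) bV b(3) e2 bu by auto
  have "a = b" using distinct_idx[OF dist, of a b] ap bp b j ak kj by simp
  then show False using ak kb by simp
qed

end


lemma path_len: "is_path V E xs \<Longrightarrow> finite V \<Longrightarrow> length xs \<le> card V"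
  unfolding is_path_def by (metis card_mono distinct_card)

lemma shortest_path:
  assumes "is_path V E xs" "hd xs = a" "last xs = b"
  shows "\<exists>zs. is_path V E zs \<and> hd zs = a \<and> last zs = b \<and>
     (\<forall>ys. is_path V E ys \<and> hd ys = a \<and> last ys = b \<longrightarrow> length zs \<le> length ys)"
proof -
  have "xs \<in> {ys. is_path V E ys \<and> hd ys = a \<and> last ys = b}" using assms by auto
  from enat_INF_attained[OF this] show ?thesis by auto
qed

lemma sdist_sub:
  assumes WV: "W \<subseteq> V" and S0: "Dn \<inter> W = S0"
  shows "sdist V E Dn x s \<le> sdist W (restrict_edges E W) S0 x s"
  unfolding sdist_vp
proof (rule INF_superset_mono)
  show "{xs. vp W (restrict_edges E W) S0 x s xs} \<subseteq> {xs. vp V E Dn x s xs}"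
  proof
    fix xs assume "xs \<in> {xs. vp W (restrict_edges E W) S0 x s xs}"
    then have v: "vp W (restrict_edges E W) S0 x s xs" by simp
    then have p: "is_path W (restrict_edges E W) xs" by (simp add: vp_def)
    then have sW: "set xs \<subseteq> W" and ne: "xs \<noteq> []" by (auto simp: is_path_def)
    have hl: "{hd xs, last xs} \<subseteq> W" using sW ne by auto
    have "{hd xs, last xs} \<inter> Dn = {hd xs, last xs} \<inter> S0" using hl S0 by auto
    moreover have "set (butlast (tl xs)) \<subseteq> W" using sW
      by (cases xs) (auto dest: in_set_butlastD)
    then have "set (butlast (tl xs)) \<inter> Dn = set (butlast (tl xs)) \<inter> S0" using S0 by auto
    ultimately show "xs \<in> {xs. vp V E Dn x s xs}" using v path_W_V[OF WV p] unfolding vp_def by auto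
  qed
qed simp

lemma weight_self:
  assumes "finite Dn" "x \<in> Dn" "x \<in> V"
  shows "weight V E Dn x \<ge> 2"
proof -
  have "half_pow (sdist V E Dn x x) = 2" using sdist_self[of x V Dn E] assms
    by (simp add: zero_enat_def hp_enat)
  moreover have "half_pow (sdist V E Dn x x) \<le> weight V E Dn x"
    unfolding weight_def by (rule member_le_sum) (use assms hp_nonneg in auto)
  ultimately show ?thesis by simp
qed

lemma internal_deg:
  assumes G: "graph V E" and p: "is_path V E xs" and j: "0 < j" "Suc j < length xs"
  shows "degree V E (xs!j) \<ge> 2"
proof -
  have d: "distinct xs" using p by (simp add: is_path_def)
  have "xs!(j-1) \<noteq> xs!Suc j" using d j nth_eq_iff_index_eq by fastforce
  moreover have "E (xs!j) (xs!(j-1))" using path_edge[OF p, of "j-1"] j graph_sym[OF G] by simp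
  moreover have "E (xs!j) (xs!Suc j)" using path_edge[OF p, of j] j by simp
  ultimately have "{xs!(j-1), xs!Suc j} \<subseteq> {v\<in>V. E (xs!j) v}" "card {xs!(j-1), xs!Suc j} = 2"
    using graph_in[OF G] by auto
  moreover have "finite V" using G by (simp add: graph_def)
  ultimately show ?thesis unfolding degree_def
    by (metis (no_types, lifting) card_mono finite_subset mem_Collect_eq subsetI)
qed

lemma internal_notS:
  assumes G: "graph V E" and p: "is_path V E xs" and S: "S \<subseteq> {u\<in>V. degree V E u \<le> 1}"
  shows "set (butlast (tl xs)) \<inter> S = {}"
proof (rule ccontr)
  assume "set (butlast (tl xs)) \<inter> S \<noteq> {}"
  then obtain x where x: "x \<in> set (butlast (tl xs))" "x \<in> S" by auto
  obtain j where "0 < j" "Suc j < length xs" "xs!j = x" using internal_nth[OF x(1)] by auto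
  then have "degree V E x \<ge> 2" using internal_deg[OF G p] by auto
  then show False using x S by auto
qed

lemma butlast_tl_rev: "set (butlast (tl (rev xs))) = set (butlast (tl xs))"
proof (cases xs rule: rev_cases)
  case Nil then show ?thesis by simp
next
  case (snoc ys z)
  then show ?thesis by (cases ys) (auto simp: butlast_rev)
qed

lemma gd_shortest:
  assumes G: "graph V E" and p: "is_path V E zs" and h: "hd zs = y" and l: "last zs = x"
    and sh: "\<forall>ys. is_path V E ys \<and> hd ys = y \<and> last ys = x \<longrightarrow> length zs \<le> length ys"
    and n: "2 \<le> length zs"
  shows "gdist V E (zs!1) x = enat (length zs - 2)"
proof (rule antisym)
  have "is_path V E (drop 1 zs)" by (rule path_drop[OF p]) (use n in auto)
  moreover have "hd (drop 1 zs) = zs!1" using n by (simp add: hd_drop_conv_nth)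
  moreover have "last (drop 1 zs) = x" using n l by simp
  ultimately have "gdist V E (zs!1) x \<le> enat (length (drop 1 zs) - 1)" by (rule gdist_le)
  then show "gdist V E (zs!1) x \<le> enat (length zs - 2)" by (simp add: numeral_2_eq_2)
next
  have zne: "zs \<noteq> []" using n by auto
  have z0: "zs!0 = y" using h hd_conv_nth[OF zne] by simp
  have e: "E y (zs!1)" using path_edge[OF p, of 0] n z0 by simp
  have dz: "zs!1 \<noteq> y"
  proof
    assume "zs!1 = y"
    then have "1 = (0::nat)" using distinct_idx[of zs 1 0] p n z0 unfolding is_path_def by simp
    then show False by simp
  qed
  show "enat (length zs - 2) \<le> gdist V E (zs!1) x"
    unfolding gdist_def
  proof (rule INF_greatest)
    fix qs assume "qs \<in> {xs. is_path V E xs \<and> hd xs = zs ! 1 \<and> last xs = x}"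
    then have q: "is_path V E qs" "hd qs = zs!1" "last qs = x" by auto
    have qne: "qs \<noteq> []" using q by (auto simp: is_path_def)
    show "enat (length zs - 2) \<le> enat (length qs - 1)"
    proof (cases "y \<in> set qs")
      case False
      have "is_path V E ([y] @ qs)" by (rule path_app) (use q False e graph_in[OF G e] in \<open>auto simp: is_path_def\<close>)
      then have "length zs \<le> length ([y] @ qs)" using sh qne q by auto
      then show ?thesis by simp
    next
      case True
      then obtain j where j: "j < length qs" "qs!j = y" by (auto simp: in_set_conv_nth)
      have "j \<noteq> 0"
      proof
        assume "j = 0"
        then have "qs!0 = y" using j by simp
        moreover have "qs!0 = zs!1" using q(2) hd_conv_nth[OF qne] by simp
        ultimately show False using dz by simp
      qed
      have "is_path V E (drop j qs)" by (rule path_drop[OF q(1) j(1)])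
      moreover have "hd (drop j qs) = y" using j by (simp add: hd_drop_conv_nth)
      moreover have "last (drop j qs) = x" using j q by simp
      ultimately have "length zs \<le> length (drop j qs)" using sh by blast
      then show ?thesis using \<open>j \<noteq> 0\<close> by simp
    qed
  qed
qed

lemma kraft:
  assumes G: "graph V E" and deg: "\<forall>a\<in>V. degree V E a \<le> 3"
  shows "\<forall>a b F. E b a \<longrightarrow> finite F \<longrightarrow>
     (\<forall>Q\<in>F. Q \<noteq> [] \<and> hd Q = a \<and> is_path V E (b#Q) \<and> length Q \<le> n) \<longrightarrow>
     (\<forall>Q\<in>F. \<forall>Q'\<in>F. Q = take (length Q) Q' \<longrightarrow> Q = Q') \<longrightarrow>
     (\<Sum>Q\<in>F. (1/2::real)^(length Q - 1)) \<le> 1"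
proof (induction n)
  case 0
  show ?case
  proof (intro allI impI)
    fix a b and F :: "'a list set"
    assume FQ: "\<forall>Q\<in>F. Q \<noteq> [] \<and> hd Q = a \<and> is_path V E (b#Q) \<and> length Q \<le> 0"
    have "F = {}"
    proof (rule ccontr)
      assume "F \<noteq> {}"
      then obtain Q where "Q \<in> F" by auto
      then show False using FQ by auto
    qed
    then show "(\<Sum>Q\<in>F. (1/2::real)^(length Q - 1)) \<le> 1" by simp
  qed
next
  case (Suc n)
  show ?case
  proof (intro allI impI)
    fix a b and F :: "'a list set"
    assume eba: "E b a" and fin: "finite F"
      and FQ: "\<forall>Q\<in>F. Q \<noteq> [] \<and> hd Q = a \<and> is_path V E (b#Q) \<and> length Q \<le> Suc n"
      and pf: "\<forall>Q\<in>F. \<forall>Q'\<in>F. Q = take (length Q) Q' \<longrightarrow> Q = Q'"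
    show "(\<Sum>Q\<in>F. (1/2::real)^(length Q - 1)) \<le> 1"
    proof (cases "[a] \<in> F")
      case True
      have "F = {[a]}"
      proof
        show "F \<subseteq> {[a]}"
        proof
          fix Q assume Q: "Q \<in> F"
          then have "Q \<noteq> []" "hd Q = a" using FQ by auto
          then have "[a] = take (length [a]) Q" by (cases Q) auto
          then have "[a] = Q" using pf True Q by blast
          then show "Q \<in> {[a]}" by simp
        qed
      qed (use True in auto)
      then show ?thesis by simp
    next
      case False
      define C where "C = {c\<in>V. E a c} - {b}"
      have aV: "a \<in> V" "b \<in> V" using graph_in[OF G eba] by auto
      have finV: "finite V" using G by (simp add: graph_def)
      have cC: "card C \<le> 2"
      proof -
        have "b \<in> {c\<in>V. E a c}" using aV graph_sym[OF G eba] by auto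
        moreover have "card {c\<in>V. E a c} \<le> 3" using deg aV unfolding degree_def by auto
        ultimately show ?thesis unfolding C_def using finV by (simp add: card_Diff_singleton)
      qed
      have finC: "finite C" unfolding C_def using finV by auto
      have Q2: "\<And>Q. Q \<in> F \<Longrightarrow> 2 \<le> length Q \<and> Q = a # tl Q \<and> Q!1 \<in> C"
      proof -
        fix Q assume Q: "Q \<in> F"
        then have q: "Q \<noteq> []" "hd Q = a" "is_path V E (b#Q)" using FQ by auto
        have Qa: "Q = a # tl Q" using q by (cases Q) auto
        have tne: "tl Q \<noteq> []"
        proof
          assume "tl Q = []"
          then have "Q = [a]" using Qa by simp
          then show False using Q False by simp
        qed
        then have "length (tl Q) \<ge> 1" by (cases "tl Q") auto
        then have l2: "2 \<le> length Q" using q(1) by simp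
        have e12: "E ((b#Q)!1) ((b#Q)!2)" using path_edge[OF q(3), of 1] l2 by (simp add: numeral_2_eq_2)
        have "(b#Q)!1 = a" using q by (simp add: hd_conv_nth)
        moreover have "(b#Q)!2 = Q!1" by (simp add: numeral_2_eq_2)
        ultimately have eaQ: "E a (Q!1)" using e12 by simp
        have "distinct (b#Q)" using q(3) by (simp add: is_path_def)
        then have "b \<notin> set Q" by simp
        moreover have "Q!1 \<in> set Q" using l2 by simp
        ultimately have "Q!1 \<noteq> b" by auto
        moreover have "Q!1 \<in> V" using graph_in[OF G eaQ] by auto
        ultimately have "Q!1 \<in> C" using eaQ unfolding C_def by auto
        then show "2 \<le> length Q \<and> Q = a # tl Q \<and> Q!1 \<in> C" using l2 Qa by (intro conjI)
      qed
      have "(\<Sum>Q\<in>F. (1/2::real)^(length Q - 1)) =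
            (\<Sum>c\<in>C. \<Sum>Q\<in>{Q. Q \<in> F \<and> Q!1 = c}. (1/2::real)^(length Q - 1))"
        by (rule sum.group[symmetric]) (use fin finC Q2 in blast)+
      also have "\<dots> \<le> (\<Sum>c\<in>C. 1/2)"
      proof (rule sum_mono)
        fix c assume cC: "c \<in> C"
        define Fc where "Fc = {Q. Q \<in> F \<and> Q!1 = c}"
        have injtl: "inj_on tl Fc"
        proof (rule inj_onI)
          fix Q Q' assume "Q \<in> Fc" "Q' \<in> Fc" "tl Q = tl Q'"
          moreover have "Q \<in> F" "Q' \<in> F" using calculation Fc_def by auto
          moreover have "Q = a # tl Q" using Q2[OF calculation(4)] by blast
          moreover have "Q' = a # tl Q'" using Q2[OF calculation(5)] by blast
          ultimately show "Q = Q'" by metis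
        qed
        have "(\<Sum>Q\<in>Fc. (1/2::real)^(length Q - 1)) = (\<Sum>Q\<in>Fc. (1/2) * (1/2::real)^(length (tl Q) - 1))"
        proof (rule sum.cong)
          fix Q assume "Q \<in> Fc"
          then have "Q \<in> F" using Fc_def by auto
          then have "2 \<le> length Q" using Q2 by blast
          then have "length Q - 1 = Suc (length (tl Q) - 1)" by simp
          then show "(1/2::real)^(length Q - 1) = (1/2) * (1/2::real)^(length (tl Q) - 1)" by simp
        qed simp
        also have "\<dots> = (1/2) * (\<Sum>Q'\<in>tl ` Fc. (1/2::real)^(length Q' - 1))"
          by (simp add: sum_distrib_left sum.reindex[OF injtl])
        also have "\<dots> \<le> (1/2) * 1"
        proof -
          have eac: "E a c" using cC C_def by auto
          have finFc: "finite (tl ` Fc)" using fin Fc_def by auto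
          have c1: "\<forall>Q\<in>tl ` Fc. Q \<noteq> [] \<and> hd Q = c \<and> is_path V E (a#Q) \<and> length Q \<le> n"
          proof
            fix Q' assume "Q' \<in> tl ` Fc"
            then obtain Q where Q: "Q \<in> F" "Q!1 = c" "Q' = tl Q" using Fc_def by auto
            have l2: "2 \<le> length Q" and Qa: "Q = a # tl Q" using Q2[OF Q(1)] by blast+
            have pb: "is_path V E (b#Q)" and lq: "length Q \<le> Suc n" using FQ Q by auto
            have "is_path V E (drop 1 (b#Q))" by (rule path_drop[OF pb]) (use l2 in auto)
            then have "is_path V E Q" by simp
            then have "is_path V E (a # tl Q)" using Qa by metis
            moreover have "tl Q \<noteq> []" using l2 by (cases Q) auto
            moreover have "hd (tl Q) = Q!1" using calculation(2) by (cases Q) (auto simp: hd_conv_nth)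
            moreover have "length (tl Q) \<le> n" using lq by simp
            ultimately show "Q' \<noteq> [] \<and> hd Q' = c \<and> is_path V E (a#Q') \<and> length Q' \<le> n"
              using Q by auto
          qed
          have c2: "\<forall>Q\<in>tl ` Fc. \<forall>Q'\<in>tl ` Fc. Q = take (length Q) Q' \<longrightarrow> Q = Q'"
          proof (intro ballI impI)
            fix R R' assume R: "R \<in> tl ` Fc" "R' \<in> tl ` Fc" and t: "R = take (length R) R'"
            then obtain Q Q' where Q: "Q \<in> F" "R = tl Q" "Q' \<in> F" "R' = tl Q'" using Fc_def by auto
            have q1: "Q = a # R" using Q2[OF Q(1)] Q(2) by blast
            have q2: "Q' = a # R'" using Q2[OF Q(3)] Q(4) by blast
            have "Q = take (length Q) Q'" unfolding q1 q2 using t by simp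
            then have "Q = Q'" using pf Q by auto
            then show "R = R'" using Q by simp
          qed
          have "(\<Sum>Q'\<in>tl ` Fc. (1/2::real)^(length Q' - 1)) \<le> 1" using Suc.IH eac finFc c1 c2 by blast
          then show ?thesis by simp
        qed
        finally show "(\<Sum>Q\<in>{Q. Q \<in> F \<and> Q!1 = c}. (1/2::real)^(length Q - 1)) \<le> 1/2"
          unfolding Fc_def by simp
      qed
      also have "\<dots> = card C / 2" by simp
      also have "\<dots> \<le> 1" using cC by simp
      finally show ?thesis .
    qed
  qed
qed


lemma child_bound:
  assumes T: "tree V E" and rV: "r \<in> V" and finD: "finite Dn" and DV: "Dn \<subseteq> V"
    and yD: "y \<in> Dn" and xV: "x \<in> V" and xD: "x \<notin> Dn"
    and zs: "is_path V E zs" "hd zs = y" "last zs = x"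
    and sh: "\<forall>ys. is_path V E ys \<and> hd ys = y \<and> last ys = x \<longrightarrow> length zs \<le> length ys"
    and xW: "x \<in> subtree_verts V E r (zs!1)" and yW: "y \<notin> subtree_verts V E r (zs!1)"
    and DW: "Dn \<inter> subtree_verts V E r (zs!1) = S \<inter> subtree_verts V E r (zs!1)"
    and dwc: "dw V E S r (zs!1) \<le> 1"
    and int: "set (butlast (tl zs)) \<inter> Dn = {}"
  shows "weight V E Dn x \<ge> 1"
proof -
  have G: "graph V E" using T by (simp add: tree_def)
  have finV: "finite V" using G by (simp add: graph_def)
  define c where "c = zs!1"
  define Wc where "Wc = subtree_verts V E r c"
  define n where "n = length zs"
  have zne: "zs \<noteq> []" using zs by (simp add: is_path_def)
  have xy: "x \<noteq> y" using xD yD by auto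
  have n2: "n \<ge> 2"
  proof (rule ccontr)
    assume "\<not> n \<ge> 2"
    then have "n = 1" using zne n_def by (cases zs) (auto simp: Suc_le_eq)
    then have "zs = [hd zs]" using zne n_def by (cases zs) auto
    then have "x = y" using zs by (metis last.simps)
    then show False using xy by simp
  qed
  have cV: "c \<in> V" using path_in[OF zs(1), of 1] n2 n_def c_def by simp
  interpret trc: tr V E r c using T rV cV by unfold_locales
  have WcV: "Wc \<subseteq> V" using trc.W_sub Wc_def by simp
  have finWc: "finite Wc" using finite_subset[OF WcV finV] .
  have gd: "gdist V E c x = enat (n - 2)" using gd_shortest[OF G zs sh] n2 n_def c_def by simp
  define wW where "wW = weight Wc (restrict_edges E Wc) (S \<inter> Wc) x"
  have "2 ^ (n - 2) * (1 - wW) \<le> dw V E S r c"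
  proof -
    have "(\<lambda>v. 2 ^ the_enat (gdist V E c v) * (1 - weight Wc (restrict_edges E Wc) (S \<inter> Wc) v)) x
          \<le> Max ((\<lambda>v. 2 ^ the_enat (gdist V E c v) * (1 - weight Wc (restrict_edges E Wc) (S \<inter> Wc) v)) ` Wc)"
      by (rule Max_ge) (use finWc xW Wc_def c_def in auto)
    then show ?thesis unfolding dw_def Let_def Wc_def[symmetric] wW_def using gd by simp
  qed
  then have "2 ^ (n - 2) * (1 - wW) \<le> 1" using dwc c_def by simp
  then have w1: "1 - wW \<le> 1 / 2 ^ (n - 2)" by (simp add: field_simps)
  have vp: "vp V E Dn x y (rev zs)"
  proof -
    have "is_path V E (rev zs)" by (rule path_rev[OF G zs(1)])
    moreover have "hd (rev zs) = x" "last (rev zs) = y" using zs zne by (auto simp: hd_rev last_rev)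
    moreover have "{x, y} \<inter> Dn = {y}" using xD yD by auto
    moreover have "set (butlast (tl (rev zs))) \<inter> Dn = {}" using int butlast_tl_rev by metis
    ultimately show ?thesis unfolding vp_def using xy by auto
  qed
  have "sdist V E Dn x y \<le> enat (n - 1)" using sdist_le[OF vp] n_def by simp
  then have "half_pow (enat (n - 1)) \<le> half_pow (sdist V E Dn x y)" by (rule hp_mono)
  moreover have "half_pow (enat (n - 1)) = 1 / 2 ^ (n - 2)"
  proof -
    have "n - 1 = Suc (n - 2)" using n2 by simp
    then show ?thesis by (simp add: hp_enat)
  qed
  ultimately have hy: "1 / 2 ^ (n - 2) \<le> half_pow (sdist V E Dn x y)" by simp
  have hs: "wW \<le> (\<Sum>s\<in>S \<inter> Wc. half_pow (sdist V E Dn x s))"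
    unfolding wW_def weight_def
  proof (rule sum_mono)
    fix s assume "s \<in> S \<inter> Wc"
    have "sdist V E Dn x s \<le> sdist Wc (restrict_edges E Wc) (S \<inter> Wc) x s"
      by (rule sdist_sub[OF WcV]) (use DW Wc_def c_def in simp)
    then show "half_pow (sdist Wc (restrict_edges E Wc) (S \<inter> Wc) x s) \<le> half_pow (sdist V E Dn x s)"
      by (rule hp_mono)
  qed
  have sub: "insert y (S \<inter> Wc) \<subseteq> Dn" using DW yD Wc_def c_def by auto
  have yn: "y \<notin> S \<inter> Wc" using yW Wc_def c_def by simp
  have finSW: "finite (S \<inter> Wc)" using finWc by simp
  have "(\<Sum>s\<in>insert y (S \<inter> Wc). half_pow (sdist V E Dn x s)) \<le> weight V E Dn x"
    unfolding weight_def by (rule sum_mono2[OF finD sub]) (simp add: hp_nonneg)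
  moreover have "(\<Sum>s\<in>insert y (S \<inter> Wc). half_pow (sdist V E Dn x s)) =
     half_pow (sdist V E Dn x y) + (\<Sum>s\<in>S \<inter> Wc. half_pow (sdist V E Dn x s))"
    using finSW yn by simp
  ultimately show ?thesis using w1 hy hs by linarith
qed

lemma S_fin:
  assumes "tree V E" "S \<subseteq> {u\<in>V. degree V E u \<le> 1}"
  shows "finite S" "S \<subseteq> V"
proof -
  have "finite V" using assms(1) by (simp add: tree_def graph_def)
  moreover show "S \<subseteq> V" using assms(2) by auto
  ultimately show "finite S" using finite_subset by blast
qed

lemma part2_dom:
  assumes T: "tree V E" and SL: "S \<subseteq> {u\<in>V. degree V E u \<le> 1}"
    and rS: "r \<in> V - S" and le: "\<forall>u\<in>V. dw V E S r u \<le> 1"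
  shows "exp_dom V E (S \<union> {r})"
  unfolding exp_dom_def
proof (intro conjI ballI)
  have G: "graph V E" using T by (simp add: tree_def)
  have finS: "finite S" and SV: "S \<subseteq> V" using S_fin[OF T SL] by auto
  show "S \<union> {r} \<subseteq> V" using SV rS by auto
  fix x assume xV: "x \<in> V"
  show "1 \<le> weight V E (S \<union> {r}) x"
  proof (cases "x \<in> S \<union> {r}")
    case True
    then show ?thesis using weight_self[of "S \<union> {r}" x V E] finS xV by simp
  next
    case False
    have rV: "r \<in> V" using rS by simp
    interpret trr: tr V E r r using T rV by unfold_locales
    obtain xs where "is_path V E xs" "hd xs = r" "last xs = x" using trr.conn[OF rV xV] by blast
    then obtain zs where zs: "is_path V E zs" "hd zs = r" "last zs = x"
      and sh: "\<forall>ys. is_path V E ys \<and> hd ys = r \<and> last ys = x \<longrightarrow> length zs \<le> length ys"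
      using shortest_path by metis
    have zne: "zs \<noteq> []" using zs by (simp add: is_path_def)
    have dist: "distinct zs" using zs by (simp add: is_path_def)
    have xr: "x \<noteq> r" using False by simp
    have n2: "length zs \<ge> 2"
    proof (rule ccontr)
      assume "\<not> length zs \<ge> 2"
      then have "zs = [hd zs]" using zne by (cases zs) (auto simp: Suc_le_eq)
      then have "x = r" using zs by (metis last.simps)
      then show False using xr by simp
    qed
    define c where "c = zs!1"
    have z0: "zs!0 = r" using zs hd_conv_nth[OF zne] by simp
    have cr: "c \<noteq> r"
    proof
      assume "c = r"
      then have "(1::nat) = 0" using distinct_idx[OF dist, of 1 0] z0 n2 c_def zne by simp
      then show False by simp
    qed
    have cV: "c \<in> V" using path_in[OF zs(1), of 1] n2 c_def by simp
    interpret trc: tr V E r c using T rV cV by unfold_locales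
    have cin: "c \<in> set zs" using n2 c_def by simp
    have xW: "x \<in> subtree_verts V E r c"
    proof (cases "x = c")
      case True then show ?thesis using trc.u_in_W by simp
    next
      case False
      then show ?thesis using zs cin xV unfolding subtree_verts_def descendants_def by auto
    qed
    have rW: "r \<notin> subtree_verts V E r c" using trc.r_notin_W cr by simp
    have DW: "(S \<union> {r}) \<inter> subtree_verts V E r c = S \<inter> subtree_verts V E r c" using rW by auto
    have int: "set (butlast (tl zs)) \<inter> (S \<union> {r}) = {}"
    proof -
      have "set (butlast (tl zs)) \<inter> S = {}" by (rule internal_notS[OF G zs(1) SL])
      moreover have "r \<notin> set (butlast (tl zs))"
      proof
        assume "r \<in> set (butlast (tl zs))"
        then obtain j where j: "0 < j" "Suc j < length zs" "zs!j = r" using internal_nth by metis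
        then have "j = 0" using distinct_idx[OF dist, of j 0] z0 zne by simp
        then show False using j by simp
      qed
      ultimately show ?thesis by auto
    qed
    show ?thesis
      by (rule child_bound[OF T rV _ _ _ xV False zs sh])
         (use finS SV rV xW rW DW le cV int c_def in auto)
  qed
qed

lemma part2:
  assumes T: "tree V E" and SL: "S \<subseteq> {u\<in>V. degree V E u \<le> 1}"
    and nd: "\<not> exp_dom V E S"
    and ex: "\<exists>D. min_exp_dom V E D \<and> S \<subseteq> D"
    and rS: "r \<in> V - S" and le: "\<forall>u\<in>V. dw V E S r u \<le> 1"
  shows "min_exp_dom V E (S \<union> {r})"
proof -
  have ed: "exp_dom V E (S \<union> {r})" by (rule part2_dom[OF T SL rS le])
  have finV: "finite V" using T by (simp add: tree_def graph_def)
  have finS: "finite S" using S_fin[OF T SL] by auto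
  obtain D where D: "min_exp_dom V E D" "S \<subseteq> D" using ex by blast
  have DV: "D \<subseteq> V" using D by (simp add: min_exp_dom_def exp_dom_def)
  have finD: "finite D" using finite_subset[OF DV finV] .
  have "D \<noteq> S" using D nd by (auto simp: min_exp_dom_def)
  then have "S \<subset> D" using D by auto
  then have "card S < card D" by (rule psubset_card_mono[OF finD])
  moreover have "card (S \<union> {r}) = Suc (card S)" using rS finS by simp
  ultimately have c: "card (S \<union> {r}) \<le> card D" by simp
  show ?thesis unfolding min_exp_dom_def
  proof (intro conjI allI impI)
    show "exp_dom V E (S \<union> {r})" by (rule ed)
    fix S' assume "exp_dom V E S'"
    then have "card D \<le> card S'" using D by (simp add: min_exp_dom_def)
    then show "card (S \<union> {r}) \<le> card S'" using c by simp
  qed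
qed


lemma prefix_internal:
  assumes t: "A = take (length A) (drop i P)" and ne: "A \<noteq> []" and ll: "last A \<noteq> last P"
    and i: "0 < i" "i < length P"
  shows "last A \<in> set (butlast (tl P))"
proof -
  define B where "B = drop i P"
  have lB: "length B = length P - i" unfolding B_def by simp
  have lastB: "last B = last P" unfolding B_def using i by simp
  have le: "length A \<le> length B" using arg_cong[OF t, of length] unfolding B_def[symmetric] by simp
  have neq: "length A \<noteq> length B"
  proof
    assume "length A = length B"
    then have "A = B" using t unfolding B_def[symmetric] by simp
    then show False using ll lastB by simp
  qed
  have lt: "length A < length B" using le neq by simp
  have "last A = A ! (length A - 1)" using ne by (simp add: last_conv_nth)
  also have "\<dots> = B ! (length A - 1)" using t lt ne unfolding B_def[symmetric]
    by (metis diff_less length_greater_0_conv less_trans nth_take zero_less_one)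
  also have "\<dots> = P ! (i + (length A - 1))" unfolding B_def using i lt lB by simp
  finally have eq: "last A = P ! (i + (length A - 1))" .
  have "0 < i + (length A - 1)" using i by simp
  moreover have "Suc (i + (length A - 1)) < length P" using lt lB ne i
    by (metis Suc_pred' add_Suc_right length_greater_0_conv less_diff_conv add.commute)
  ultimately show ?thesis using eq internal_mem by metis
qed

lemma kraft_app:
  assumes G: "graph V E" and deg: "\<forall>a\<in>V. degree V E a \<le> 3" and fin: "finite X" and eba: "E b a"
    and QP: "\<forall>s\<in>X. Q s \<noteq> [] \<and> hd (Q s) = a \<and> is_path V E (b # Q s)"
    and pf: "\<forall>s\<in>X. \<forall>t\<in>X. Q s = take (length (Q s)) (Q t) \<longrightarrow> s = t"
  shows "(\<Sum>s\<in>X. (1/2::real)^(length (Q s) - 1)) \<le> 1"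
proof -
  have finV: "finite V" using G by (simp add: graph_def)
  have inj: "inj_on Q X"
  proof (rule inj_onI)
    fix s t assume "s \<in> X" "t \<in> X" "Q s = Q t"
    then show "s = t" using pf by (metis take_all order_refl)
  qed
  have "(\<Sum>s\<in>X. (1/2::real)^(length (Q s) - 1)) = (\<Sum>R\<in>Q ` X. (1/2::real)^(length R - 1))"
    by (simp add: sum.reindex[OF inj])
  also have "\<dots> \<le> 1"
  proof -
    have k: "\<forall>a b F. E b a \<longrightarrow> finite F \<longrightarrow>
     (\<forall>Q\<in>F. Q \<noteq> [] \<and> hd Q = a \<and> is_path V E (b#Q) \<and> length Q \<le> card V) \<longrightarrow>
     (\<forall>Q\<in>F. \<forall>Q'\<in>F. Q = take (length Q) Q' \<longrightarrow> Q = Q') \<longrightarrow>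
     (\<Sum>Q\<in>F. (1/2::real)^(length Q - 1)) \<le> 1" by (rule kraft[OF G deg])
    have c1: "\<forall>R\<in>Q ` X. R \<noteq> [] \<and> hd R = a \<and> is_path V E (b#R) \<and> length R \<le> card V"
    proof
      fix R assume "R \<in> Q ` X"
      then obtain s where s: "s \<in> X" "R = Q s" by auto
      then have "is_path V E (b # Q s)" using QP by auto
      then have "length (b # Q s) \<le> card V" using path_len finV by blast
      then show "R \<noteq> [] \<and> hd R = a \<and> is_path V E (b#R) \<and> length R \<le> card V" using QP s by auto
    qed
    have c2: "\<forall>R\<in>Q ` X. \<forall>R'\<in>Q ` X. R = take (length R) R' \<longrightarrow> R = R'"
      using pf by blast
    show ?thesis using k eba fin c1 c2 by blast
  qed
  finally show ?thesis .
qed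

context tr
begin

definition par where "par = (SOME p. p \<in> V \<and> p \<notin> W \<and> E u p \<and> (\<forall>b\<in>V. b \<notin> W \<longrightarrow> E u b \<longrightarrow> b = p))"

lemma par: assumes "u \<noteq> r"
  shows "par \<in> V" "par \<notin> W" "E u par" "E par u" "\<And>b. b \<in> V \<Longrightarrow> b \<notin> W \<Longrightarrow> E u b \<Longrightarrow> b = par"
proof -
  have "par \<in> V \<and> par \<notin> W \<and> E u par \<and> (\<forall>b\<in>V. b \<notin> W \<longrightarrow> E u b \<longrightarrow> b = par)"
    unfolding par_def by (rule someI_ex) (rule parent[OF assms])
  then show "par \<in> V" "par \<notin> W" "E u par" "E par u" "\<And>b. b \<in> V \<Longrightarrow> b \<notin> W \<Longrightarrow> E u b \<Longrightarrow> b = par"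
    using graph_sym[OF G] by auto
qed

lemma exit_decomp:
  assumes ur: "u \<noteq> r" and p: "is_path V E P" and h: "P!0 \<in> W" and l: "P!(length P - 1) \<notin> W"
  shows "\<exists>i. 0 < i \<and> i < length P \<and> P!(i-1) = u \<and> P!i = par \<and> (\<forall>m<i. P!m \<in> W) \<and>
             (\<forall>m. i \<le> m \<and> m < length P \<longrightarrow> P!m \<notin> W)"
proof -
  have ne: "P \<noteq> []" using p by (simp add: is_path_def)
  obtain b where b: "0 \<le> b" "b \<le> length P - 1" "P!b \<notin> W" "\<forall>m. 0 \<le> m \<and> m < b \<longrightarrow> P!m \<in> W"
    using first_after[of "\<lambda>m. P!m \<notin> W" "length P - 1" 0] l by auto
  have b0: "0 < b" using b h by (cases b) auto
  have bl: "b < length P" using b ne by (cases P) auto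
  have "P!(b-1) \<in> W" using b b0 by auto
  moreover have e: "E (P!(b-1)) (P!b)" using path_edge[OF p, of "b-1"] b0 bl by simp
  moreover have bV: "P!b \<in> V" using path_in[OF p bl] .
  ultimately have u1: "P!(b-1) = u" using cross_edge' b(3) by blast
  have "P!b = par" using par(5)[OF ur bV b(3)] e u1 by simp
  moreover have "\<forall>m. b \<le> m \<and> m < length P \<longrightarrow> P!m \<notin> W"
  proof (intro allI impI)
    fix m assume "b \<le> m \<and> m < length P"
    then show "P!m \<notin> W" using stay_out[OF ur p b(3) l, of m] ne by (cases P) auto
  qed
  ultimately show ?thesis using b0 bl u1 b(4) by auto
qed

lemma enter_decomp:
  assumes ur: "u \<noteq> r" and p: "is_path V E P" and h: "P!0 \<notin> W" and l: "P!(length P - 1) \<in> W"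
  shows "\<exists>i. 0 < i \<and> i < length P \<and> P!(i-1) = par \<and> P!i = u \<and> (\<forall>m<i. P!m \<notin> W) \<and>
             (\<forall>m. i \<le> m \<and> m < length P \<longrightarrow> P!m \<in> W)"
proof -
  have ne: "P \<noteq> []" using p by (simp add: is_path_def)
  obtain b where b: "0 \<le> b" "b \<le> length P - 1" "P!b \<in> W" "\<forall>m. 0 \<le> m \<and> m < b \<longrightarrow> P!m \<notin> W"
    using first_after[of "\<lambda>m. P!m \<in> W" "length P - 1" 0] l by auto
  have b0: "0 < b" using b h by (cases b) auto
  have bl: "b < length P" using b ne by (cases P) auto
  have o: "P!(b-1) \<notin> W" using b b0 by auto
  moreover have e: "E (P!(b-1)) (P!b)" using path_edge[OF p, of "b-1"] b0 bl by simp
  moreover have bV: "P!(b-1) \<in> V" using path_in[OF p] bl by simp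
  ultimately have u1: "P!b = u" using cross_edge b(3) by blast
  have "P!(b-1) = par" using par(5)[OF ur bV o] graph_sym[OF G e] u1 by simp
  moreover have "\<forall>m. b \<le> m \<and> m < length P \<longrightarrow> P!m \<in> W"
  proof (intro allI impI)
    fix m assume "b \<le> m \<and> m < length P"
    then show "P!m \<in> W" using stay_in[OF p b(3) l, of m] ne by (cases P) auto
  qed
  ultimately show ?thesis using b0 bl u1 b(4) by auto
qed

lemma vp_in_W:
  assumes v: "vp V E D v s xs" and vW: "v \<in> W" and sW: "s \<in> W" and DW: "D \<inter> W = S0"
  shows "vp W (restrict_edges E W) S0 v s xs"
proof -
  have p: "is_path V E xs" and h: "hd xs = v" and l: "last xs = s" using v by (auto simp: vp_def)
  have ne: "xs \<noteq> []" using p by (simp add: is_path_def)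
  have x0: "xs!0 \<in> W" using h vW hd_conv_nth[OF ne] by simp
  have xl: "xs!(length xs - 1) \<in> W" using l sW last_conv_nth[OF ne] by simp
  have sub: "set xs \<subseteq> W"
  proof
    fix y assume "y \<in> set xs"
    then obtain k where k: "k < length xs" "xs!k = y" by (auto simp: in_set_conv_nth)
    then show "y \<in> W" using stay_in[OF p x0 xl, of k] by simp
  qed
  have hl: "{hd xs, last xs} \<subseteq> W" using sub ne by auto
  have "set (butlast (tl xs)) \<subseteq> W" using sub by (cases xs) (auto dest: in_set_butlastD)
  then have e2: "set (butlast (tl xs)) \<inter> D = set (butlast (tl xs)) \<inter> S0" using DW by auto
  have e1: "{hd xs, last xs} \<inter> D = {hd xs, last xs} \<inter> S0" using hl DW by auto
  show ?thesis using v path_sub_W[OF p sub] unfolding vp_def e1[symmetric] e2[symmetric] by auto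
qed

end


lemma half_split: "(2::real) / 2 ^ (a + b + 1) = (1/2)^a * (1/2)^b"
  by (simp add: power_add power_one_over)

lemma hp_inf: "half_pow \<infinity> = 0" by (simp add: half_pow_def)

lemma half_le: "k \<le> a \<Longrightarrow> (1/2::real)^a \<le> (1/2)^k"
  by (rule power_decreasing) auto

context tr
begin

lemma outside_sum:
  assumes ur: "u \<noteq> r" and deg: "\<forall>a\<in>V. degree V E a \<le> 3" and vW: "v \<in> W"
    and finD: "finite D" and DV: "D \<subseteq> V"
  shows "(\<Sum>s\<in>D - W. half_pow (sdist V E D v s)) \<le> (1/2) ^ the_enat (gdist V E u v)"
proof -
  define k where "k = the_enat (gdist V E u v)"
  define X where "X = {s\<in>D - W. sdist V E D v s \<noteq> \<infinity>}"
  have finX: "finite X" using finD X_def by auto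
  have sX: "(\<Sum>s\<in>D - W. half_pow (sdist V E D v s)) = (\<Sum>s\<in>X. half_pow (sdist V E D v s))"
  proof (rule sum.mono_neutral_cong_right)
    show "\<forall>i\<in>(D - W) - X. half_pow (sdist V E D v i) = 0"
    proof
      fix i assume "i \<in> (D - W) - X"
      then have "sdist V E D v i = \<infinity>" by (auto simp: X_def)
      then show "half_pow (sdist V E D v i) = 0" by (simp add: hp_inf)
    qed
  qed (use finD in \<open>auto simp: X_def\<close>)
  define P where "P s = (SOME xs. vp V E D v s xs \<and> enat (length xs - 1) = sdist V E D v s)" for s
  have P: "vp V E D v s (P s) \<and> enat (length (P s) - 1) = sdist V E D v s" if "s \<in> X" for s
  proof -
    from that obtain m where m: "sdist V E D v s = enat m" unfolding X_def by auto
    then obtain xs where "vp V E D v s xs" "length xs = Suc m" using sdist_attained[OF m] by blast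
    then have "\<exists>xs. vp V E D v s xs \<and> enat (length xs - 1) = sdist V E D v s" using m by auto
    then show ?thesis unfolding P_def by (rule someI_ex)
  qed
  define I where "I s = (SOME i. 0 < i \<and> i < length (P s) \<and> P s!(i-1) = u \<and> P s!i = par \<and>
      (\<forall>m<i. P s!m \<in> W) \<and> (\<forall>m. i \<le> m \<and> m < length (P s) \<longrightarrow> P s!m \<notin> W))" for s
  have I: "0 < I s \<and> I s < length (P s) \<and> P s!(I s - 1) = u \<and> P s!I s = par \<and>
      (\<forall>m<I s. P s!m \<in> W) \<and> (\<forall>m. I s \<le> m \<and> m < length (P s) \<longrightarrow> P s!m \<notin> W)" if s: "s\<in>X" for s
  proof -
    have v: "vp V E D v s (P s)" using P[OF s] by simp
    have p: "is_path V E (P s)" "hd (P s) = v" "last (P s) = s" using v by (auto simp: vp_def)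
    have ne: "P s \<noteq> []" using p by (simp add: is_path_def)
    have a1: "P s!0 \<in> W" using p(2) vW hd_conv_nth[OF ne] by simp
    moreover have a2: "P s!(length (P s) - 1) \<notin> W" using p(3) s X_def last_conv_nth[OF ne] by auto
    show ?thesis unfolding I_def by (rule someI_ex[OF exit_decomp[OF ur p(1) a1 a2]])
  qed
  define Q where "Q s = drop (I s) (P s)" for s
  have Qprops: "Q s \<noteq> [] \<and> hd (Q s) = par \<and> is_path V E (u # Q s) \<and> last (Q s) = s" if s: "s \<in> X" for s
  proof -
    have v: "vp V E D v s (P s)" using P[OF s] by simp
    have p: "is_path V E (P s)" "last (P s) = s" using v by (auto simp: vp_def)
    have Is: "0 < I s" "I s < length (P s)" "P s!(I s - 1) = u" "P s!I s = par" using I[OF s] by auto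
    have "is_path V E (drop (I s - 1) (P s))" by (rule path_drop[OF p(1)]) (use Is in simp)
    moreover have "drop (I s - 1) (P s) = u # Q s"
      using Cons_nth_drop_Suc[of "I s - 1" "P s"] Is unfolding Q_def by simp
    ultimately show ?thesis using Is p unfolding Q_def by (auto simp: hd_drop_conv_nth)
  qed
  have bound: "half_pow (sdist V E D v s) \<le> (1/2)^k * (1/2)^(length (Q s) - 1)" if s: "s \<in> X" for s
  proof -
    have v: "vp V E D v s (P s)" and len: "enat (length (P s) - 1) = sdist V E D v s" using P[OF s] by auto
    have p: "is_path V E (P s)" "hd (P s) = v" "last (P s) = s" using v by (auto simp: vp_def)
    have ne: "P s \<noteq> []" using p by (simp add: is_path_def)
    have Is: "0 < I s" "I s < length (P s)" "P s!(I s - 1) = u" using I[OF s] by auto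
    have pt: "is_path V E (rev (take (I s) (P s)))" by (rule path_rev[OF G path_take[OF p(1) Is(1)]])
    have l1: "last (take (I s) (P s)) = P s!(I s - 1)"
      using Is by (cases "I s") (auto simp: take_Suc_conv_app_nth)
    have h1: "hd (take (I s) (P s)) = v" using Is(1) ne p(2) by (cases "P s"; cases "I s") auto
    have "gdist V E u v \<le> enat (length (rev (take (I s) (P s))) - 1)"
      by (rule gdist_le[OF pt]) (use l1 h1 Is ne in \<open>auto simp: hd_rev last_rev\<close>)
    then have gl: "gdist V E u v \<le> enat (I s - 1)" using Is by simp
    then obtain g where g: "gdist V E u v = enat g" "g \<le> I s - 1" by (cases "gdist V E u v") auto
    have kg: "k \<le> I s - 1" using g k_def by simp
    have lP: "length (P s) - 1 = (I s - 1) + (length (Q s) - 1) + 1" unfolding Q_def using Is by simp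
    have "half_pow (sdist V E D v s) = 2 / 2 ^ (length (P s) - 1)" using len[symmetric] by (simp add: hp_enat)
    also have "\<dots> = (1/2)^(I s - 1) * (1/2)^(length (Q s) - 1)" unfolding lP by (rule half_split)
    also have "\<dots> \<le> (1/2)^k * (1/2)^(length (Q s) - 1)"
      by (rule mult_right_mono[OF half_le[OF kg]]) simp
    finally show ?thesis .
  qed
  have pf: "\<forall>s\<in>X. \<forall>t\<in>X. Q s = take (length (Q s)) (Q t) \<longrightarrow> s = t"
  proof (intro ballI impI)
    fix s t assume s: "s \<in> X" and t: "t \<in> X" and tk: "Q s = take (length (Q s)) (Q t)"
    show "s = t"
    proof (rule ccontr)
      assume st: "s \<noteq> t"
      have vt: "vp V E D v t (P t)" using P[OF t] by simp
      have It: "0 < I t" "I t < length (P t)" using I[OF t] by auto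
      have "last (Q s) \<in> set (butlast (tl (P t)))"
      proof (rule prefix_internal[OF _ _ _ It])
        show "Q s = take (length (Q s)) (drop (I t) (P t))" using tk unfolding Q_def[of t] .
        show "Q s \<noteq> []" using Qprops[OF s] by simp
        show "last (Q s) \<noteq> last (P t)" using Qprops[OF s] vt st by (simp add: vp_def)
      qed
      then have "s \<in> set (butlast (tl (P t)))" using Qprops[OF s] by simp
      moreover have "s \<in> D" using s X_def by simp
      ultimately show False using vt by (auto simp: vp_def)
    qed
  qed
  have "(\<Sum>s\<in>X. half_pow (sdist V E D v s)) \<le> (\<Sum>s\<in>X. (1/2)^k * (1/2::real)^(length (Q s) - 1))"
    by (rule sum_mono) (rule bound)
  also have "\<dots> = (1/2)^k * (\<Sum>s\<in>X. (1/2::real)^(length (Q s) - 1))" by (simp add: sum_distrib_left)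
  also have "\<dots> \<le> (1/2)^k * 1"
  proof (rule mult_left_mono)
    show "(\<Sum>s\<in>X. (1/2::real)^(length (Q s) - 1)) \<le> 1"
      by (rule kraft_app[OF G deg finX par(3)[OF ur]]) (use Qprops pf in auto)
  qed simp
  finally show ?thesis using sX k_def by simp
qed

lemma claimA:
  assumes ur: "u \<noteq> r" and deg: "\<forall>a\<in>V. degree V E a \<le> 3"
    and finD: "finite D" and DV: "D \<subseteq> V" and DW: "D \<inter> W = S \<inter> W"
    and ed: "exp_dom V E D" and gt: "dw V E S r u > 1"
  shows False
proof -
  define f where "f v = 2 ^ the_enat (gdist V E u v) * (1 - weight W (restrict_edges E W) (S \<inter> W) v)" for v
  have finW: "finite W" using finite_subset[OF W_sub finV] .
  have "dw V E S r u = Max (f ` W)" unfolding dw_def Let_def f_def by simp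
  moreover have "Max (f ` W) \<in> f ` W" by (rule Max_in) (use finW u_in_W in auto)
  ultimately obtain v where vW: "v \<in> W" and fv: "f v > 1" using gt by auto
  define k where "k = the_enat (gdist V E u v)"
  define wW where "wW = weight W (restrict_edges E W) (S \<inter> W) v"
  have "1 < 2 ^ k * (1 - wW)" using fv unfolding f_def k_def wW_def by simp
  then have w1: "(1/2)^k < 1 - wW" by (simp add: power_one_over pos_divide_less_eq mult.commute)
  have "weight V E D v = (\<Sum>s\<in>D \<inter> W. half_pow (sdist V E D v s)) + (\<Sum>s\<in>D - W. half_pow (sdist V E D v s))"
    unfolding weight_def by (rule sum.Int_Diff[OF finD])
  moreover have "(\<Sum>s\<in>D \<inter> W. half_pow (sdist V E D v s)) \<le> wW"
    unfolding wW_def weight_def DW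
  proof (rule sum_mono)
    fix s assume sS: "s \<in> S \<inter> W"
    have "sdist W (restrict_edges E W) (S \<inter> W) v s \<le> sdist V E D v s"
      unfolding sdist_vp
    proof (rule INF_superset_mono)
      show "{xs. vp V E D v s xs} \<subseteq> {xs. vp W (restrict_edges E W) (S \<inter> W) v s xs}"
        using vp_in_W[OF _ vW _ DW] sS by auto
    qed simp
    then show "half_pow (sdist V E D v s) \<le> half_pow (sdist W (restrict_edges E W) (S \<inter> W) v s)"
      by (rule hp_mono)
  qed
  moreover have "(\<Sum>s\<in>D - W. half_pow (sdist V E D v s)) \<le> (1/2)^k"
    unfolding k_def by (rule outside_sum[OF ur deg vW finD DV])
  moreover have "weight V E D v \<ge> 1" using ed vW W_sub by (auto simp: exp_dom_def)
  ultimately show False using w1 by linarith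
qed

end


lemma half_split2: "(2::real) / 2 ^ (a + b) = 2 * (1/2)^a * (1/2)^b"
  by (simp add: power_add power_one_over)

lemma out_eq: "A \<inter> W = {} \<Longrightarrow> Dp - W = D - W \<Longrightarrow> A \<inter> Dp = A \<inter> D"
  by blast

context tr
begin

lemma outside_mono:
  assumes ur: "u \<noteq> r" and xW: "x \<notin> W" and sD: "s \<in> D - W" and Dp: "Dp - W = D - W"
  shows "half_pow (sdist V E D x s) \<le> half_pow (sdist V E Dp x s)"
proof (cases "sdist V E D x s")
  case infinity
  then show ?thesis by (simp add: hp_inf hp_nonneg)
next
  case (enat m)
  then obtain P where v: "vp V E D x s P" and lP: "length P = Suc m" using sdist_attained[of V E D x s m] by blast
  have p: "is_path V E P" "hd P = x" "last P = s" using v by (auto simp: vp_def)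
  have ne: "P \<noteq> []" using p by (simp add: is_path_def)
  have a1: "P!0 \<notin> W" using p(2) xW hd_conv_nth[OF ne] by simp
  have a2: "P!(length P - 1) \<notin> W" using p(3) sD last_conv_nth[OF ne] by auto
  have out: "set P \<inter> W = {}"
  proof (rule ccontr)
    assume "set P \<inter> W \<noteq> {}"
    then obtain k where k: "k < length P" "P!k \<in> W" by (auto simp: in_set_conv_nth)
    then show False using stay_out[OF ur p(1) a1 a2, of k] by simp
  qed
  have o1: "{hd P, last P} \<inter> W = {}" using out ne hd_in_set[OF ne] last_in_set[OF ne] by blast
  have o2: "set (butlast (tl P)) \<inter> W = {}" using out by (cases P) (auto dest: in_set_butlastD)
  have "vp V E Dp x s P" using v unfolding vp_def out_eq[OF o1 Dp] out_eq[OF o2 Dp] by blast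
  then have "sdist V E Dp x s \<le> sdist V E D x s" using sdist_le enat lP by fastforce
  then show ?thesis by (rule hp_mono)
qed

lemma inside_sum:
  assumes ur: "u \<noteq> r" and deg: "\<forall>a\<in>V. degree V E a \<le> 3" and xW: "x \<notin> W"
    and finD: "finite D" and DV: "D \<subseteq> V"
    and uDp: "u \<in> Dp" and Dp: "Dp - W = D - W" and xDp: "x \<notin> Dp"
  shows "(\<Sum>s\<in>D \<inter> W. half_pow (sdist V E D x s)) \<le> half_pow (sdist V E Dp x u)"
proof -
  define X where "X = {s\<in>D \<inter> W. sdist V E D x s \<noteq> \<infinity>}"
  have finX: "finite X" using finD X_def by auto
  have sX: "(\<Sum>s\<in>D \<inter> W. half_pow (sdist V E D x s)) = (\<Sum>s\<in>X. half_pow (sdist V E D x s))"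
  proof (rule sum.mono_neutral_cong_right)
    show "\<forall>i\<in>(D \<inter> W) - X. half_pow (sdist V E D x i) = 0"
    proof
      fix i assume "i \<in> (D \<inter> W) - X"
      then have "sdist V E D x i = \<infinity>" by (auto simp: X_def)
      then show "half_pow (sdist V E D x i) = 0" by (simp add: hp_inf)
    qed
  qed (use finD in \<open>auto simp: X_def\<close>)
  define P where "P s = (SOME xs. vp V E D x s xs \<and> enat (length xs - 1) = sdist V E D x s)" for s
  have P: "vp V E D x s (P s) \<and> enat (length (P s) - 1) = sdist V E D x s" if "s \<in> X" for s
  proof -
    from that obtain m where m: "sdist V E D x s = enat m" unfolding X_def by auto
    then obtain xs where "vp V E D x s xs" "length xs = Suc m" using sdist_attained[OF m] by blast
    then have "\<exists>xs. vp V E D x s xs \<and> enat (length xs - 1) = sdist V E D x s" using m by auto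
    then show ?thesis unfolding P_def by (rule someI_ex)
  qed
  define I where "I s = (SOME i. 0 < i \<and> i < length (P s) \<and> P s!(i-1) = par \<and> P s!i = u \<and>
      (\<forall>m<i. P s!m \<notin> W) \<and> (\<forall>m. i \<le> m \<and> m < length (P s) \<longrightarrow> P s!m \<in> W))" for s
  have I: "0 < I s \<and> I s < length (P s) \<and> P s!(I s - 1) = par \<and> P s!I s = u \<and>
      (\<forall>m<I s. P s!m \<notin> W) \<and> (\<forall>m. I s \<le> m \<and> m < length (P s) \<longrightarrow> P s!m \<in> W)" if s: "s\<in>X" for s
  proof -
    have v: "vp V E D x s (P s)" using P[OF s] by simp
    have p: "is_path V E (P s)" "hd (P s) = x" "last (P s) = s" using v by (auto simp: vp_def)
    have ne: "P s \<noteq> []" using p by (simp add: is_path_def)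
    have a1: "P s!0 \<notin> W" using p(2) xW hd_conv_nth[OF ne] by simp
    have a2: "P s!(length (P s) - 1) \<in> W" using p(3) s X_def last_conv_nth[OF ne] by auto
    show ?thesis unfolding I_def by (rule someI_ex[OF enter_decomp[OF ur p(1) a1 a2]])
  qed
  have uW: "u \<in> W" by (rule u_in_W)
  have xu: "x \<noteq> u" using xW uW by auto
  have Vp: "sdist V E Dp x u \<le> enat (I s)" if s: "s \<in> X" for s
  proof -
    have v: "vp V E D x s (P s)" using P[OF s] by simp
    have p: "is_path V E (P s)" "hd (P s) = x" "last (P s) = s" using v by (auto simp: vp_def)
    have ne: "P s \<noteq> []" using p by (simp add: is_path_def)
    have Is: "0 < I s" "I s < length (P s)" "P s!I s = u" "\<forall>m<I s. P s!m \<notin> W" using I[OF s] by auto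
    define A where "A = take (Suc (I s)) (P s)"
    have pA: "is_path V E A" unfolding A_def by (rule path_take[OF p(1)]) simp
    have hA: "hd A = x" unfolding A_def using p(2) ne by (cases "P s") auto
    have lA: "last A = u" unfolding A_def using Is by (simp add: take_Suc_conv_app_nth)
    have lenA: "length A = Suc (I s)" unfolding A_def using Is by simp
    have cA: "card ({hd A, last A} \<inter> Dp) = 1" using hA lA xDp uDp xu by auto
    have iA: "set (butlast (tl A)) \<inter> Dp = {}"
    proof (rule ccontr)
      assume "set (butlast (tl A)) \<inter> Dp \<noteq> {}"
      then obtain y where y: "y \<in> set (butlast (tl A))" "y \<in> Dp" by auto
      obtain j where j: "0 < j" "Suc j < length A" "A!j = y" using internal_nth[OF y(1)] by blast
      have jI: "j < I s" using j lenA by simp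
      have yP: "y = P s!j" using j jI unfolding A_def by simp
      have yW: "y \<notin> W" using Is(4) jI yP by simp
      have "P s!j \<in> set (butlast (tl (P s)))" by (rule internal_mem) (use j jI Is in auto)
      then have "y \<notin> D" using v yP by (auto simp: vp_def)
      moreover have "y \<in> D" using y(2) yW Dp by auto
      ultimately show False by simp
    qed
    have "vp V E Dp x u A" unfolding vp_def using pA hA lA cA iA by simp
    from sdist_le[OF this] show ?thesis using lenA by simp
  qed
  show ?thesis
  proof (cases "X = {}")
    case True
    then show ?thesis using sX by (simp add: hp_nonneg)
  next
    case False
    then obtain s0 where s0: "s0 \<in> X" by auto
    from Vp[OF s0] obtain m where m: "sdist V E Dp x u = enat m" by (cases "sdist V E Dp x u") auto
    have mI: "m \<le> I s" if "s \<in> X" for s using Vp[OF that] m by simp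
    define B where "B s = drop (I s) (P s)" for s
    have Bprops: "B s \<noteq> [] \<and> hd (B s) = u \<and> is_path V E (par # B s) \<and> last (B s) = s" if s: "s \<in> X" for s
    proof -
      have v: "vp V E D x s (P s)" using P[OF s] by simp
      have p: "is_path V E (P s)" "last (P s) = s" using v by (auto simp: vp_def)
      have Is: "0 < I s" "I s < length (P s)" "P s!(I s - 1) = par" "P s!I s = u" using I[OF s] by auto
      have "is_path V E (drop (I s - 1) (P s))" by (rule path_drop[OF p(1)]) (use Is in simp)
      moreover have "drop (I s - 1) (P s) = par # B s"
        using Cons_nth_drop_Suc[of "I s - 1" "P s"] Is unfolding B_def by simp
      ultimately show ?thesis using Is p unfolding B_def by (auto simp: hd_drop_conv_nth)
    qed
    have bound: "half_pow (sdist V E D x s) \<le> 2 * (1/2)^m * (1/2)^(length (B s) - 1)" if s: "s \<in> X" for s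
    proof -
      have len: "enat (length (P s) - 1) = sdist V E D x s" using P[OF s] by auto
      have Is: "0 < I s" "I s < length (P s)" using I[OF s] by auto
      have lP: "length (P s) - 1 = I s + (length (B s) - 1)" unfolding B_def using Is by simp
      have "half_pow (sdist V E D x s) = 2 / 2 ^ (length (P s) - 1)" using len[symmetric] by (simp add: hp_enat)
      also have "\<dots> = 2 * (1/2)^(I s) * (1/2)^(length (B s) - 1)" unfolding lP by (rule half_split2)
      also have "\<dots> \<le> 2 * (1/2)^m * (1/2)^(length (B s) - 1)"
        using half_le[OF mI[OF s]] by (intro mult_right_mono) auto
      finally show ?thesis .
    qed
    have pf: "\<forall>s\<in>X. \<forall>t\<in>X. B s = take (length (B s)) (B t) \<longrightarrow> s = t"
    proof (intro ballI impI)
      fix s t assume s: "s \<in> X" and t: "t \<in> X" and tk: "B s = take (length (B s)) (B t)"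
      show "s = t"
      proof (rule ccontr)
        assume st: "s \<noteq> t"
        have vt: "vp V E D x t (P t)" using P[OF t] by simp
        have It: "0 < I t" "I t < length (P t)" using I[OF t] by auto
        have "last (B s) \<in> set (butlast (tl (P t)))"
        proof (rule prefix_internal[OF _ _ _ It])
          show "B s = take (length (B s)) (drop (I t) (P t))" using tk unfolding B_def[of t] .
          show "B s \<noteq> []" using Bprops[OF s] by simp
          show "last (B s) \<noteq> last (P t)" using Bprops[OF s] vt st by (simp add: vp_def)
        qed
        then have "s \<in> set (butlast (tl (P t)))" using Bprops[OF s] by simp
        moreover have "s \<in> D" using s X_def by simp
        ultimately show False using vt by (auto simp: vp_def)
      qed
    qed
    have "(\<Sum>s\<in>X. half_pow (sdist V E D x s)) \<le> (\<Sum>s\<in>X. 2 * (1/2)^m * (1/2::real)^(length (B s) - 1))"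
      by (rule sum_mono) (rule bound)
    also have "\<dots> = 2 * (1/2)^m * (\<Sum>s\<in>X. (1/2::real)^(length (B s) - 1))" by (simp add: sum_distrib_left)
    also have "\<dots> \<le> 2 * (1/2)^m * 1"
    proof (rule mult_left_mono)
      show "(\<Sum>s\<in>X. (1/2::real)^(length (B s) - 1)) \<le> 1"
        by (rule kraft_app[OF G deg finX par(4)[OF ur]]) (use Bprops pf in auto)
    qed simp
    also have "\<dots> = half_pow (sdist V E Dp x u)" using m by (simp add: hp_enat power_one_over)
    finally show ?thesis using sX by simp
  qed
qed

end


context tr
begin

lemma claimB:
  assumes ur: "u \<noteq> r" and deg: "\<forall>a\<in>V. degree V E a \<le> 3"
    and SL: "S \<subseteq> {u\<in>V. degree V E u \<le> 1}" and SD: "S \<subseteq> D"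
    and finD: "finite D" and DV: "D \<subseteq> V" and ed: "exp_dom V E D"
    and desc: "\<forall>v\<in>descendants V E r u. dw V E S r v \<le> 1"
  shows "exp_dom V E ((D - W) \<union> (S \<inter> W) \<union> {u})"
proof -
  define D' where "D' = (D - W) \<union> (S \<inter> W) \<union> {u}"
  have SV: "S \<subseteq> V" using SD DV by auto
  have D'V: "D' \<subseteq> V" unfolding D'_def using DV SV uV by auto
  have finD': "finite D'" unfolding D'_def using finD finite_subset[OF _ finD] SD by auto
  have uD': "u \<in> D'" unfolding D'_def by simp
  have D'W: "D' - W = D - W" unfolding D'_def using u_in_W by auto
  have "\<forall>x\<in>V. 1 \<le> weight V E D' x"
  proof
    fix x assume xV: "x \<in> V"
    show "1 \<le> weight V E D' x"
    proof (cases "x \<in> D'")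
      case True
      then show ?thesis using weight_self[OF finD' True xV, of E] by simp
    next
      case xD': False
      show ?thesis
      proof (cases "x \<in> W")
        case False
        have "(\<Sum>s\<in>insert u (D - W). half_pow (sdist V E D' x s)) \<le> weight V E D' x"
          unfolding weight_def by (rule sum_mono2[OF finD']) (use uD' D'W in \<open>auto simp: hp_nonneg\<close>)
        moreover have "(\<Sum>s\<in>insert u (D - W). half_pow (sdist V E D' x s)) =
            half_pow (sdist V E D' x u) + (\<Sum>s\<in>D - W. half_pow (sdist V E D' x s))"
          using finD u_in_W by simp
        moreover have "(\<Sum>s\<in>D \<inter> W. half_pow (sdist V E D x s)) \<le> half_pow (sdist V E D' x u)"
          by (rule inside_sum[OF ur deg False finD DV uD' D'W xD'])
        moreover have "(\<Sum>s\<in>D - W. half_pow (sdist V E D x s)) \<le> (\<Sum>s\<in>D - W. half_pow (sdist V E D' x s))"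
          by (rule sum_mono) (rule outside_mono[OF ur False _ D'W])
        moreover have "weight V E D x = (\<Sum>s\<in>D \<inter> W. half_pow (sdist V E D x s)) + (\<Sum>s\<in>D - W. half_pow (sdist V E D x s))"
          unfolding weight_def by (rule sum.Int_Diff[OF finD])
        moreover have "1 \<le> weight V E D x" using ed xV by (simp add: exp_dom_def)
        ultimately show ?thesis by linarith
      next
        case xW: True
        have xu: "x \<noteq> u" using xD' uD' by auto
        obtain xs0 where "is_path V E xs0" "hd xs0 = u" "last xs0 = x" using conn[OF uV xV] by blast
        then obtain zs where zs: "is_path V E zs" "hd zs = u" "last zs = x"
          and sh: "\<forall>ys. is_path V E ys \<and> hd ys = u \<and> last ys = x \<longrightarrow> length zs \<le> length ys"
          using shortest_path by metis
        have zne: "zs \<noteq> []" using zs by (simp add: is_path_def)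
        have dz: "distinct zs" using zs by (simp add: is_path_def)
        define n where "n = length zs"
        have n2: "n \<ge> 2"
        proof (rule ccontr)
          assume "\<not> n \<ge> 2"
          then have "zs = [hd zs]" using zne n_def by (cases zs) (auto simp: Suc_le_eq)
          then have "x = u" using zs by (metis last.simps)
          then show False using xu by simp
        qed
        have z0: "zs!0 = u" using zs hd_conv_nth[OF zne] by simp
        have zl: "zs!(n-1) = x" using zs last_conv_nth[OF zne] n_def by simp
        have z0W: "zs!0 \<in> W" using z0 u_in_W by simp
        have zlW: "zs!(length zs - 1) \<in> W" using zl xW n_def by simp
        have zsW: "set zs \<subseteq> W"
        proof
          fix y assume "y \<in> set zs"
          then obtain k where k: "k < length zs" "zs!k = y" by (auto simp: in_set_conv_nth)
          then show "y \<in> W" using stay_in[OF zs(1) z0W zlW, of k] by simp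
        qed
        define c where "c = zs!1"
        have cin: "c \<in> set zs" using n2 n_def c_def by simp
        have cW: "c \<in> W" using cin zsW by auto
        have cu: "c \<noteq> u"
        proof
          assume "c = u"
          then have "(1::nat) = 0" using distinct_idx[OF dz, of 1 0] z0 n2 n_def c_def zne by simp
          then show False by simp
        qed
        have cV: "c \<in> V" using cW W_sub by auto
        interpret trc: tr V E r c using T rV cV by unfold_locales
        have cdesc: "c \<in> descendants V E r u" using cW cu unfolding subtree_verts_def by auto
        obtain ps where ps: "is_path V E ps" "hd ps = r" "last ps = u" using conn[OF rV uV] by blast
        define np where "np = length ps"
        have pne: "ps \<noteq> []" using ps by (simp add: is_path_def)
        have dps: "distinct ps" using ps by (simp add: is_path_def)
        have np2: "np \<ge> 2"
        proof (rule ccontr)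
          assume "\<not> np \<ge> 2"
          then have "ps = [hd ps]" using pne np_def by (cases ps) (auto simp: Suc_le_eq)
          then have "r = u" using ps by (metis last.simps)
          then show False using ur by simp
        qed
        have p0: "ps!0 = r" using ps hd_conv_nth[OF pne] by simp
        have pl: "ps!(np-1) = u" using ps last_conv_nth[OF pne] np_def by simp
        have p0W: "ps!0 \<notin> W" using p0 r_notin_W[OF ur] by simp
        have bW: "set (butlast ps) \<inter> W = {}"
        proof (rule ccontr)
          assume "set (butlast ps) \<inter> W \<noteq> {}"
          then obtain y where y: "y \<in> set (butlast ps)" "y \<in> W" by auto
          then obtain m where m: "m < length (butlast ps)" "butlast ps ! m = y" by (auto simp: in_set_conv_nth)
          have m2: "m < np - 1" "ps!m = y" using m np_def by (auto simp: nth_butlast)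
          have ml: "m < length ps" using m2 np_def by simp
          obtain j where j: "j \<le> m" "ps!j = u" using enter_u[OF ps(1) p0W ml] m2 y by auto
          have "j = np - 1" using distinct_idx[OF dps, of j "np-1"] j pl m2 np_def pne by simp
          then show False using j m2 by simp
        qed
        have bne: "butlast ps \<noteq> []"
        proof
          assume "butlast ps = []"
          then have "length (butlast ps) = 0" by simp
          then show False using np2 np_def by simp
        qed
        have pb: "is_path V E (butlast ps)" unfolding butlast_conv_take by (rule path_take[OF ps(1)]) (use np2 np_def in simp)
        have lb: "last (butlast ps) = ps!(np-2)"
          using bne np2 np_def by (simp add: last_conv_nth nth_butlast numeral_2_eq_2)
        have "E (ps!(np-2)) (ps!Suc (np-2))" by (rule path_edge[OF ps(1)]) (use np2 np_def in simp)
        moreover have "Suc (np-2) = np - 1" using np2 by simp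
        ultimately have ee: "E (last (butlast ps)) (hd zs)" using lb pl zs(2) by simp
        have pQ: "is_path V E (butlast ps @ zs)" by (rule path_app[OF pb zs(1) _ ee]) (use bW zsW in blast)
        have hQ: "hd (butlast ps @ zs) = r" using bne ps(2) pne by (cases ps) auto
        have lQ: "last (butlast ps @ zs) = x" using zs zne by simp
        have cQ: "c \<in> set (butlast ps @ zs)" using cin by simp
        have xWc: "x \<in> subtree_verts V E r c"
        proof (cases "x = c")
          case True then show ?thesis using trc.u_in_W by simp
        next
          case False
          then show ?thesis using pQ hQ lQ cQ xV unfolding subtree_verts_def descendants_def by blast
        qed
        have WcW: "subtree_verts V E r c \<subseteq> W"
        proof
          fix y assume y: "y \<in> subtree_verts V E r c"
          show "y \<in> W"
          proof (cases "y = c")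
            case True then show ?thesis using cW by simp
          next
            case False
            then obtain ts where ts: "is_path V E ts" "hd ts = r" "last ts = y" "c \<in> set ts"
              using trc.in_W_path y by blast
            have tne: "ts \<noteq> []" using ts by (simp add: is_path_def)
            obtain m where m: "m < length ts" "ts!m = c" using ts(4) by (auto simp: in_set_conv_nth)
            have t0: "ts!0 \<notin> W" using ts(2) hd_conv_nth[OF tne] p0W p0 by simp
            obtain j where "j \<le> m" "ts!j = u" using enter_u[OF ts(1) t0 m(1)] m cW by auto
            then have "u \<in> set ts" using m by (metis le_less_trans nth_mem)
            then show ?thesis using path_to_W[OF ts(1) ts(2)] ts(3) by simp
          qed
        qed
        have uWc: "u \<notin> subtree_verts V E r c"
        proof
          assume "u \<in> subtree_verts V E r c"
          then obtain ts where ts: "is_path V E ts" "hd ts = r" "last ts = u" "c \<in> set ts"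
            using trc.in_W_path cu by metis
          have tne: "ts \<noteq> []" using ts by (simp add: is_path_def)
          have dts: "distinct ts" using ts by (simp add: is_path_def)
          obtain m where m: "m < length ts" "ts!m = c" using ts(4) by (auto simp: in_set_conv_nth)
          have t0: "ts!0 \<notin> W" using ts(2) hd_conv_nth[OF tne] p0W p0 by simp
          obtain j where j: "j \<le> m" "ts!j = u" using enter_u[OF ts(1) t0 m(1)] m cW by auto
          have tl: "ts!(length ts - 1) = u" using ts(3) last_conv_nth[OF tne] by simp
          have "j = length ts - 1" using distinct_idx[OF dts, of j "length ts - 1"] j m tl tne by simp
          then have "m = length ts - 1" using j m by simp
          then show False using m tl cu by simp
        qed
        have DWc: "D' \<inter> subtree_verts V E r c = S \<inter> subtree_verts V E r c"
          using WcW uWc SD unfolding D'_def by auto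
        have dwc: "dw V E S r c \<le> 1" using desc cdesc by simp
        have int: "set (butlast (tl zs)) \<inter> D' = {}"
        proof (rule ccontr)
          assume "set (butlast (tl zs)) \<inter> D' \<noteq> {}"
          then obtain y where y: "y \<in> set (butlast (tl zs))" "y \<in> D'" by auto
          obtain j where j: "0 < j" "Suc j < length zs" "zs!j = y" using internal_nth[OF y(1)] by blast
          have "y \<in> W" using j zsW by (metis Suc_lessD nth_mem subsetD)
          moreover have "y \<noteq> u"
          proof
            assume "y = u"
            then have "j = 0" using distinct_idx[OF dz, of j 0] j z0 zne by simp
            then show False using j by simp
          qed
          moreover have "y \<notin> S" using internal_notS[OF G zs(1) SL] y(1) by auto
          ultimately show False using y(2) unfolding D'_def by auto
        qed
        show ?thesis
          by (rule child_bound[OF T rV finD' D'V uD' xV xD' zs sh])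
             (use xWc uWc DWc dwc int c_def in simp_all)
      qed
    qed
  qed
  then show ?thesis unfolding D'_def[symmetric] exp_dom_def using D'V by simp
qed

end

lemma part1:
  assumes T: "tree V E" and deg: "\<forall>u\<in>V. degree V E u \<le> 3"
    and SL: "S \<subseteq> {u\<in>V. degree V E u \<le> 1}"
    and ex: "\<exists>D. min_exp_dom V E D \<and> S \<subseteq> D"
    and rS: "r \<in> V - S" and uV: "u \<in> V" and ur: "u \<noteq> r" and gt: "dw V E S r u > 1"
    and desc: "\<forall>v\<in>descendants V E r u. dw V E S r v \<le> 1"
  shows "\<exists>D. min_exp_dom V E D \<and> S \<union> {u} \<subseteq> D"
proof -
  have rV: "r \<in> V" using rS by simp
  interpret tr V E r u using T rV uV by unfold_locales
  obtain D where D: "min_exp_dom V E D" "S \<subseteq> D" using ex by blast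
  have ed: "exp_dom V E D" using D by (simp add: min_exp_dom_def)
  have DV: "D \<subseteq> V" using ed by (simp add: exp_dom_def)
  have finD: "finite D" using finite_subset[OF DV finV] .
  define D' where "D' = (D - W) \<union> (S \<inter> W) \<union> {u}"
  have ed': "exp_dom V E D'" unfolding D'_def by (rule claimB[OF ur deg SL D(2) finD DV ed desc])
  have "D \<inter> W \<noteq> S \<inter> W"
  proof
    assume "D \<inter> W = S \<inter> W"
    then show False using claimA[OF ur deg finD DV _ ed gt] by simp
  qed
  then obtain z where z: "z \<in> D" "z \<in> W" "z \<notin> S" using D(2) by auto
  have "D' \<subseteq> insert u (D - {z})" unfolding D'_def using z D(2) by auto
  then have "card D' \<le> card (insert u (D - {z}))" by (rule card_mono[rotated]) (use finD in simp)
  also have "\<dots> \<le> Suc (card (D - {z}))" using finD by (simp add: card_insert_if)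
  also have "\<dots> = card D" by (rule card_Suc_Diff1[OF finD z(1)])
  finally have cD: "card D' \<le> card D" .
  have "min_exp_dom V E D'" unfolding min_exp_dom_def
  proof (intro conjI allI impI)
    show "exp_dom V E D'" by (rule ed')
    fix S' assume "exp_dom V E S'"
    then have "card D \<le> card S'" using D by (simp add: min_exp_dom_def)
    then show "card D' \<le> card S'" using cD by simp
  qed
  moreover have "S \<union> {u} \<subseteq> D'" unfolding D'_def using D(2) by auto
  ultimately show ?thesis by blast
qed

theorem lemma3:
  fixes V :: "'a set" and E :: "'a \<Rightarrow> 'a \<Rightarrow> bool" and S :: "'a set" and r :: 'a
  assumes "tree V E"
    and "\<forall>u\<in>V. degree V E u \<le> 3"
    and "S \<subseteq> {u\<in>V. degree V E u \<le> 1}"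
    and "\<not> exp_dom V E S"
    and "\<exists>D. min_exp_dom V E D \<and> S \<subseteq> D"
    and "r \<in> V - S"
  shows "(\<forall>u\<in>V. u \<noteq> r \<longrightarrow> dw V E S r u > 1 \<longrightarrow>
            (\<forall>v\<in>descendants V E r u. dw V E S r v \<le> 1) \<longrightarrow>
            (\<exists>D. min_exp_dom V E D \<and> S \<union> {u} \<subseteq> D))
       \<and> ((\<forall>u\<in>V. dw V E S r u \<le> 1) \<longrightarrow> min_exp_dom V E (S \<union> {r}))"
proof (intro conjI ballI impI)
  fix u assume "u \<in> V" "u \<noteq> r" "dw V E S r u > 1" "\<forall>v\<in>descendants V E r u. dw V E S r v \<le> 1"
  then show "\<exists>D. min_exp_dom V E D \<and> S \<union> {u} \<subseteq> D"
    using part1[OF assms(1,2,3,5,6)] by blast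
next
  assume "\<forall>u\<in>V. dw V E S r u \<le> 1"
  then show "min_exp_dom V E (S \<union> {r})" using part2[OF assms(1,3,4,5,6)] by blast
qed


end
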